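(* Assume (SH). Let $x\in\operatorname{dom}f$, let $0<\varepsilon_t\le1$, $t\in T$, satisfy $\inf_{t\in T}\varepsilon_tf_t(x)>-\infty$, and let $\delta_t>0$, $t\in T$, satisfy $0<\inf_{t\in T}\delta_t\le\sup_{t\in T}\delta_t<+\infty$. Then \[ \mathrm{N}_{\operatorname{dom}f}(x)=\Big[\overline{\operatorname{co}}\Big(\bigcup_{t\in T}\partial_{\delta_t}(\varepsilon_tf_t)(x)\Big)\Big]_\infty . \]
   Context: $X$ is a real separated locally convex space with dual $X^*$ carrying the weak$^*$ topology. $T$ is a nonempty index set, $\{f_t: t\in T\}$ are proper convex lsc functions $X\to\mathbb{R}\cup\{+\infty\}$, $f:=\sup_{t\in T}f_t$. $\partial_\delta g(x)=\{x^*:\ g(y)\ge g(x)+\langle x^*,y-x\rangle-\delta\ \forall y\}$ if $g(x)\in\mathbb{R}$, $\delta\ge0$. $\overline{\operatorname{co}}$ is the weak$^*$-closed convex hull; $C_\infty$ is the recession cone of a nonempty closed convex set $C$; $\mathrm{N}_A(x)$ is the normal cone. (SH): $T$ is compact Hausdorff and $t\mapsto f_t(z)$ is upper semicontinuous on $T$ for each $z\in X$. *)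

theory Defs
  imports "HOL-Analysis.Analysis"
begin

definition lcs :: "'a::real_vector topology \<Rightarrow> bool" where
  "lcs \<tau> \<longleftrightarrow> topspace \<tau> = UNIV \<and> Hausdorff_space \<tau>
     \<and> continuous_map (prod_topology \<tau> \<tau>) \<tau> (\<lambda>(x, y). x + y)
     \<and> continuous_map (prod_topology euclideanreal \<tau>) \<tau> (\<lambda>(a, x). a *\<^sub>R x)
     \<and> (\<forall>U x. openin \<tau> U \<and> x \<in> U \<longrightarrow> (\<exists>V. openin \<tau> V \<and> convex V \<and> x \<in> V \<and> V \<subseteq> U))"

definition dual :: "'a::real_vector topology \<Rightarrow> ('a \<Rightarrow> real) set" where
  "dual \<tau> = {\<phi>. linear \<phi> \<and> continuous_map \<tau> euclideanreal \<phi>}"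

text \<open>Weak-star topology on the dual: topology of pointwise convergence
  (product topology on functions) restricted to the dual.\<close>
definition wstar :: "'a::real_vector topology \<Rightarrow> ('a \<Rightarrow> real) topology" where
  "wstar \<tau> = subtopology euclidean (dual \<tau>)"

definition fconvex :: "('a \<Rightarrow> real) set \<Rightarrow> bool" where
  "fconvex C \<longleftrightarrow> (\<forall>\<phi>\<in>C. \<forall>\<psi>\<in>C. \<forall>u::real. 0 \<le> u \<and> u \<le> 1 \<longrightarrow>
      (\<lambda>x. (1 - u) * \<phi> x + u * \<psi> x) \<in> C)"

definition fconv_hull :: "('a \<Rightarrow> real) set \<Rightarrow> ('a \<Rightarrow> real) set" where
  "fconv_hull A = \<Inter>{C. A \<subseteq> C \<and> fconvex C}"

definition wstar_clco :: "'a::real_vector topology \<Rightarrow> ('a \<Rightarrow> real) set \<Rightarrow> ('a \<Rightarrow> real) set" where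
  "wstar_clco \<tau> A = (wstar \<tau>) closure_of (fconv_hull A)"

definition rec_cone :: "('a \<Rightarrow> real) set \<Rightarrow> ('a \<Rightarrow> real) set" where
  "rec_cone C = {d. \<forall>c\<in>C. \<forall>l::real. l \<ge> 0 \<longrightarrow> (\<lambda>x. c x + l * d x) \<in> C}"

definition edom :: "('a \<Rightarrow> ereal) \<Rightarrow> 'a set" where
  "edom f = {x. f x < \<infinity>}"

definition normal_cone :: "'a::real_vector topology \<Rightarrow> 'a set \<Rightarrow> 'a \<Rightarrow> ('a \<Rightarrow> real) set" where
  "normal_cone \<tau> A x = {\<phi> \<in> dual \<tau>. \<forall>y\<in>A. \<phi> (y - x) \<le> 0}"

definition dsubdiff :: "'a::real_vector topology \<Rightarrow> real \<Rightarrow> ('a \<Rightarrow> ereal) \<Rightarrow> 'a \<Rightarrow> ('a \<Rightarrow> real) set" where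
  "dsubdiff \<tau> \<delta> g x = (if \<bar>g x\<bar> \<noteq> \<infinity> then
      {\<phi> \<in> dual \<tau>. \<forall>y. g y \<ge> g x + ereal (\<phi> (y - x) - \<delta>)} else {})"

definition econvex :: "('a::real_vector \<Rightarrow> ereal) \<Rightarrow> bool" where
  "econvex f \<longleftrightarrow> (\<forall>x y. \<forall>u::real. 0 \<le> u \<and> u \<le> 1 \<longrightarrow>
      f ((1 - u) *\<^sub>R x + u *\<^sub>R y) \<le> ereal (1 - u) * f x + ereal u * f y)"

definition eproper :: "('a \<Rightarrow> ereal) \<Rightarrow> bool" where
  "eproper f \<longleftrightarrow> (\<forall>x. f x \<noteq> -\<infinity>) \<and> (\<exists>x. f x \<noteq> \<infinity>)"

definition elsc :: "'a topology \<Rightarrow> ('a \<Rightarrow> ereal) \<Rightarrow> bool" where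
  "elsc \<tau> f \<longleftrightarrow> (\<forall>c. closedin \<tau> {x \<in> topspace \<tau>. f x \<le> c})"

definition eusc_on :: "'i topology \<Rightarrow> ('i \<Rightarrow> ereal) \<Rightarrow> bool" where
  "eusc_on S g \<longleftrightarrow> (\<forall>c. closedin S {t \<in> topspace S. c \<le> g t})"

end

theory Submission
  imports Defs "HOL-Library.Function_Algebras"
begin


instantiation "fun" :: (type, real_vector) real_vector
begin
definition scaleR_fun :: "real \<Rightarrow> ('a \<Rightarrow> 'b) \<Rightarrow> 'a \<Rightarrow> 'b" where
  "scaleR_fun r f = (\<lambda>x. r *\<^sub>R f x)"
instance by standard (auto simp: scaleR_fun_def fun_eq_iff algebra_simps)
end

lemma scaleR_fun_apply [simp]: "(r *\<^sub>R f) x = r *\<^sub>R f x"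
  by (simp add: scaleR_fun_def)


definition tvs :: "'a::real_vector topology \<Rightarrow> bool" where
  "tvs \<tau> \<longleftrightarrow> topspace \<tau> = UNIV
     \<and> continuous_map (prod_topology \<tau> \<tau>) \<tau> (\<lambda>(x, y). x + y)
     \<and> continuous_map (prod_topology euclideanreal \<tau>) \<tau> (\<lambda>(a, x). a *\<^sub>R x)
     \<and> (\<forall>U x. openin \<tau> U \<and> x \<in> U \<longrightarrow> (\<exists>V. openin \<tau> V \<and> convex V \<and> x \<in> V \<and> V \<subseteq> U))"

lemma lcs_tvs: "lcs \<tau> \<Longrightarrow> tvs \<tau>"
  unfolding lcs_def tvs_def by blast

lemma tvs_top: "tvs \<tau> \<Longrightarrow> topspace \<tau> = UNIV" by (simp add: tvs_def)

lemma tvs_add_cont: "tvs \<tau> \<Longrightarrow> continuous_map (prod_topology \<tau> \<tau>) \<tau> (\<lambda>(x, y). x + y)"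
  by (simp add: tvs_def)

lemma tvs_smult_cont: "tvs \<tau> \<Longrightarrow> continuous_map (prod_topology euclideanreal \<tau>) \<tau> (\<lambda>(a, x). a *\<^sub>R x)"
  by (simp add: tvs_def)

lemma tvs_lc: "tvs \<tau> \<Longrightarrow> openin \<tau> U \<Longrightarrow> x \<in> U \<Longrightarrow> \<exists>V. openin \<tau> V \<and> convex V \<and> x \<in> V \<and> V \<subseteq> U"
  by (simp add: tvs_def)

lemma tvs_transl_cont:
  assumes "tvs \<tau>" shows "continuous_map \<tau> \<tau> (\<lambda>y. y + a)"
proof -
  have "continuous_map \<tau> (prod_topology \<tau> \<tau>) (\<lambda>y. (y, a))"
    using assms by (intro continuous_map_pairedI) (auto simp: tvs_top)
  from continuous_map_compose[OF this tvs_add_cont[OF assms]] show ?thesis by (simp add: o_def)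
qed

lemma tvs_scal_cont:
  assumes "tvs \<tau>" shows "continuous_map \<tau> \<tau> (\<lambda>y. c *\<^sub>R y)"
proof -
  have "continuous_map \<tau> (prod_topology euclideanreal \<tau>) (\<lambda>y. (c, y))"
    using assms by (intro continuous_map_pairedI) (auto simp: tvs_top)
  from continuous_map_compose[OF this tvs_smult_cont[OF assms]] show ?thesis by (simp add: o_def)
qed

lemma tvs_ray_cont:
  assumes "tvs \<tau>" shows "continuous_map euclideanreal \<tau> (\<lambda>s. s *\<^sub>R y)"
proof -
  have "continuous_map euclideanreal (prod_topology euclideanreal \<tau>) (\<lambda>s. (s, y))"
    using assms by (intro continuous_map_pairedI) (auto simp: tvs_top)
  from continuous_map_compose[OF this tvs_smult_cont[OF assms]] show ?thesis by (simp add: o_def)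
qed

lemma tvs_open_transl:
  assumes "tvs \<tau>" "openin \<tau> U" shows "openin \<tau> ((\<lambda>y. y + a) ` U)"
proof -
  have "(\<lambda>y. y + a) ` U = {y \<in> topspace \<tau>. y + (-a) \<in> U}"
    using assms by (force simp: tvs_top image_iff)
  then show ?thesis using openin_continuous_map_preimage[OF tvs_transl_cont[OF assms(1), of "-a"] assms(2)]
    by simp
qed

lemma tvs_open_scal:
  assumes "tvs \<tau>" "openin \<tau> U" "c \<noteq> 0" shows "openin \<tau> ((\<lambda>y. c *\<^sub>R y) ` U)"
proof -
  have "(\<lambda>y. c *\<^sub>R y) ` U = {y \<in> topspace \<tau>. inverse c *\<^sub>R y \<in> U}"
    using assms by (force simp: tvs_top image_iff)
  then show ?thesis using openin_continuous_map_preimage[OF tvs_scal_cont[OF assms(1)] assms(2)]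
    by simp
qed

lemma tvs_absorb:
  assumes "tvs \<tau>" "openin \<tau> V" "0 \<in> V"
  shows "\<exists>t>0. \<forall>s. \<bar>s\<bar> < t \<longrightarrow> s *\<^sub>R y \<in> V"
proof -
  have "openin euclideanreal {s \<in> topspace euclideanreal. s *\<^sub>R y \<in> V}"
    using openin_continuous_map_preimage[OF tvs_ray_cont[OF assms(1)] assms(2)] .
  then have "open {s. s *\<^sub>R y \<in> V}" by simp
  moreover have "0 \<in> {s. s *\<^sub>R y \<in> V}" using assms by simp
  ultimately obtain e where "e > 0" "ball 0 e \<subseteq> {s. s *\<^sub>R y \<in> V}"
    by (meson open_contains_ball)
  then show ?thesis by (intro exI[of _ e]) (auto simp: dist_real_def)
qed

lemma tvs_open_expand:
  assumes "tvs \<tau>" "openin \<tau> V" "y \<in> V"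
  shows "\<exists>e>0. (1 + e) *\<^sub>R y \<in> V"
proof -
  have "openin euclideanreal {s \<in> topspace euclideanreal. s *\<^sub>R y \<in> V}"
    using openin_continuous_map_preimage[OF tvs_ray_cont[OF assms(1)] assms(2)] .
  then have "open {s. s *\<^sub>R y \<in> V}" by simp
  moreover have "1 \<in> {s. s *\<^sub>R y \<in> V}" using assms by simp
  ultimately obtain e where "e > 0" "ball 1 e \<subseteq> {s. s *\<^sub>R y \<in> V}"
    by (meson open_contains_ball)
  moreover have "1 + e/2 \<in> ball 1 e" using \<open>e > 0\<close> by (simp add: dist_real_def)
  ultimately show ?thesis by (intro exI[of _ "e/2"]) auto
qed




definition hbgood :: "('a::real_vector \<Rightarrow> real) \<Rightarrow> 'a \<Rightarrow> ('a \<times> real) set \<Rightarrow> bool" where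
  "hbgood p z0 G \<longleftrightarrow> (\<forall>x a b. (x,a)\<in>G \<longrightarrow> (x,b)\<in>G \<longrightarrow> a = b)
     \<and> (\<forall>x a y b. (x,a)\<in>G \<longrightarrow> (y,b)\<in>G \<longrightarrow> (x+y, a+b) \<in> G)
     \<and> (\<forall>x a c. (x,a)\<in>G \<longrightarrow> (c *\<^sub>R x, c*a) \<in> G)
     \<and> (\<forall>x a. (x,a)\<in>G \<longrightarrow> a \<le> p x) \<and> (z0, 1) \<in> G"

lemma hb_extend:
  fixes p :: "'a::real_vector \<Rightarrow> real"
  assumes sub: "\<And>x y. p (x+y) \<le> p x + p y"
    and hom: "\<And>t x. t > 0 \<Longrightarrow> p (t *\<^sub>R x) = t * p x"
    and M: "hbgood p z0 M" and y: "y \<notin> fst ` M"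
  shows "\<exists>M'. hbgood p z0 M' \<and> M \<subseteq> M' \<and> M' \<noteq> M"
proof -
  have sv: "\<And>x a b. (x,a)\<in>M \<Longrightarrow> (x,b)\<in>M \<Longrightarrow> a = b"
   and ad: "\<And>x a y b. (x,a)\<in>M \<Longrightarrow> (y,b)\<in>M \<Longrightarrow> (x+y, a+b) \<in> M"
   and sc: "\<And>x a c. (x,a)\<in>M \<Longrightarrow> (c *\<^sub>R x, c*a) \<in> M"
   and dom: "\<And>x a. (x,a)\<in>M \<Longrightarrow> a \<le> p x" and z: "(z0,1) \<in> M"
    using M unfolding hbgood_def by blast+
  have key: "a1 - p (x1 - y) \<le> p (x2 + y) - a2" if "(x1,a1) \<in> M" "(x2,a2) \<in> M" for x1 a1 x2 a2
  proof -
    have "a1 + a2 \<le> p (x1 + x2)" using dom[OF ad[OF that]] .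
    also have "x1 + x2 = (x1 - y) + (x2 + y)" by simp
    finally show ?thesis using sub[of "x1 - y" "x2 + y"] by linarith
  qed
  define L where "L = {a - p (x - y) | x a. (x,a) \<in> M}"
  define c where "c = Sup L"
  have Lne: "L \<noteq> {}" using z unfolding L_def by blast
  have Lbdd: "bdd_above L" unfolding L_def bdd_above_def
    using key z by blast
  have c1: "a - p (x - y) \<le> c" if "(x,a) \<in> M" for x a
    unfolding c_def by (rule cSup_upper[OF _ Lbdd]) (use that L_def in blast)
  have c2: "c \<le> p (x + y) - a" if "(x,a) \<in> M" for x a
    unfolding c_def by (rule cSup_least[OF Lne]) (use that key L_def in blast)
  define M' where "M' = {(x + t *\<^sub>R y, a + t * c) | x a t. (x,a) \<in> M}"
  have inM: "y \<notin> fst ` M" by (rule y)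
  have "hbgood p z0 M'"
    unfolding hbgood_def
  proof (intro conjI allI impI)
    fix x a b assume A: "(x,a) \<in> M'" "(x,b) \<in> M'"
    then obtain x1 a1 t1 x2 a2 t2 where e: "(x1,a1) \<in> M" "(x2,a2) \<in> M"
      "x = x1 + t1 *\<^sub>R y" "a = a1 + t1 * c" "x = x2 + t2 *\<^sub>R y" "b = a2 + t2 * c"
      unfolding M'_def by blast
    show "a = b"
    proof (cases "t1 = t2")
      case True
      then have "x1 = x2" using e by simp
      then show ?thesis using e True sv by blast
    next
      case False
      have "(x1 + (-1) *\<^sub>R x2, a1 + (-1) * a2) \<in> M" using ad[OF e(1) sc[OF e(2)]] .
      from sc[OF this, of "inverse (t2 - t1)"]
      have "(inverse (t2 - t1) *\<^sub>R (x1 + (-1) *\<^sub>R x2), inverse (t2 - t1) * (a1 + (-1) * a2)) \<in> M" .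
      moreover have "inverse (t2 - t1) *\<^sub>R (x1 + (-1) *\<^sub>R x2) = y"
      proof -
        have "x1 + (-1) *\<^sub>R x2 = (t2 - t1) *\<^sub>R y" using e by (simp add: algebra_simps)
        then show ?thesis using False by simp
      qed
      ultimately have "y \<in> fst ` M" by force
      then show ?thesis using inM by blast
    qed
  next
    fix x a x' b assume A: "(x,a) \<in> M'" "(x',b) \<in> M'"
    then obtain x1 a1 t1 x2 a2 t2 where e: "(x1,a1) \<in> M" "(x2,a2) \<in> M"
      "x = x1 + t1 *\<^sub>R y" "a = a1 + t1 * c" "x' = x2 + t2 *\<^sub>R y" "b = a2 + t2 * c"
      unfolding M'_def by blast
    have "(x + x', a + b) = ((x1 + x2) + (t1 + t2) *\<^sub>R y, (a1 + a2) + (t1 + t2) * c)"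
      using e by (simp add: algebra_simps)
    then show "(x + x', a + b) \<in> M'" unfolding M'_def using ad[OF e(1,2)] by blast
  next
    fix x a d assume A: "(x,a) \<in> M'"
    then obtain x1 a1 t1 where e: "(x1,a1) \<in> M" "x = x1 + t1 *\<^sub>R y" "a = a1 + t1 * c"
      unfolding M'_def by blast
    have "(d *\<^sub>R x, d * a) = (d *\<^sub>R x1 + (d * t1) *\<^sub>R y, d * a1 + (d * t1) * c)"
      using e by (simp add: algebra_simps)
    then show "(d *\<^sub>R x, d * a) \<in> M'" unfolding M'_def using sc[OF e(1)] by blast
  next
    fix x a assume A: "(x,a) \<in> M'"
    then obtain x1 a1 t where e: "(x1,a1) \<in> M" "x = x1 + t *\<^sub>R y" "a = a1 + t * c"
      unfolding M'_def by blast
    show "a \<le> p x"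
    proof (cases t "0::real" rule: linorder_cases)
      case equal then show ?thesis using e dom by simp
    next
      case greater
      have m: "(inverse t *\<^sub>R x1, inverse t * a1) \<in> M" using sc[OF e(1)] .
      have "c \<le> p (inverse t *\<^sub>R x1 + y) - inverse t * a1" using c2[OF m] .
      then have "t * c \<le> t * p (inverse t *\<^sub>R x1 + y) - a1"
        using greater by (simp add: field_simps)
      also have "t * p (inverse t *\<^sub>R x1 + y) = p (t *\<^sub>R (inverse t *\<^sub>R x1 + y))"
        using hom[OF greater] by simp
      also have "t *\<^sub>R (inverse t *\<^sub>R x1 + y) = x" using e greater by (simp add: algebra_simps)
      finally show ?thesis using e by simp
    next
      case less
      define s where "s = - t"
      have sp: "s > 0" using less s_def by simp
      have m: "(inverse s *\<^sub>R x1, inverse s * a1) \<in> M" using sc[OF e(1)] .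
      have "inverse s * a1 - p (inverse s *\<^sub>R x1 - y) \<le> c" using c1[OF m] .
      then have "a1 - s * p (inverse s *\<^sub>R x1 - y) \<le> s * c"
        using sp by (simp add: field_simps)
      also have "s * p (inverse s *\<^sub>R x1 - y) = p (s *\<^sub>R (inverse s *\<^sub>R x1 - y))"
        using hom[OF sp] by simp
      also have "s *\<^sub>R (inverse s *\<^sub>R x1 - y) = x" using e sp s_def by (simp add: algebra_simps)
      finally show ?thesis using e s_def by simp
    qed
  next
    show "(z0, 1) \<in> M'" unfolding M'_def using z by force
  qed
  moreover have "M \<subseteq> M'" unfolding M'_def by force
  moreover have "(y, c) \<in> M'"
  proof -
    have "(0 *\<^sub>R z0, 0 * 1) \<in> M" using sc[OF z] .
    then have "(0, 0) \<in> M" by simp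
    then show ?thesis unfolding M'_def by force
  qed
  then have "M' \<noteq> M" using inM by force
  ultimately show ?thesis by blast
qed

lemma hahn_banach:
  fixes p :: "'a::real_vector \<Rightarrow> real"
  assumes nonneg: "\<And>x. p x \<ge> 0" and sub: "\<And>x y. p (x+y) \<le> p x + p y"
    and hom: "\<And>t x. t > 0 \<Longrightarrow> p (t *\<^sub>R x) = t * p x" and z0: "p z0 \<ge> 1"
  shows "\<exists>\<Lambda>. linear \<Lambda> \<and> (\<forall>x. \<Lambda> x \<le> p x) \<and> \<Lambda> z0 = 1"
proof -
  define \<A> where "\<A> = {G. G = {} \<or> hbgood p z0 G}"
  have p0: "p 0 = 0" using hom[of 2 0] by simp
  have "\<forall>C\<in>chains \<A>. \<Union>C \<in> \<A>"
  proof
    fix C assume C: "C \<in> chains \<A>"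
    then have CA: "C \<subseteq> \<A>" and ch: "\<And>A B. A \<in> C \<Longrightarrow> B \<in> C \<Longrightarrow> A \<subseteq> B \<or> B \<subseteq> A"
      unfolding chains_def chain_subset_def by blast+
    have g: "hbgood p z0 G" if "G \<in> C" "G \<noteq> {}" for G using CA that \<A>_def by blast
    have two: "\<exists>G\<in>C. u \<in> G \<and> v \<in> G" if "u \<in> \<Union>C" "v \<in> \<Union>C" for u v
      using that ch by blast
    show "\<Union>C \<in> \<A>"
    proof (cases "\<Union>C = {}")
      case True then show ?thesis by (simp add: \<A>_def)
    next
      case False
      then obtain G0 where "G0 \<in> C" "G0 \<noteq> {}" by blast
      then have z: "(z0,1) \<in> \<Union>C" using g unfolding hbgood_def by blast
      have "hbgood p z0 (\<Union>C)" unfolding hbgood_def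
      proof (intro conjI allI impI)
        fix x a b assume "(x,a) \<in> \<Union>C" "(x,b) \<in> \<Union>C"
        then obtain G where "G \<in> C" "(x,a) \<in> G" "(x,b) \<in> G" using two by blast
        then show "a = b" using g[of G] unfolding hbgood_def by blast
      next
        fix x a y b assume "(x,a) \<in> \<Union>C" "(y,b) \<in> \<Union>C"
        then obtain G where "G \<in> C" "(x,a) \<in> G" "(y,b) \<in> G" using two by blast
        then show "(x+y, a+b) \<in> \<Union>C" using g[of G] unfolding hbgood_def by blast
      next
        fix x a c assume "(x,a) \<in> \<Union>C"
        then obtain G where "G \<in> C" "(x,a) \<in> G" by blast
        then show "(c *\<^sub>R x, c*a) \<in> \<Union>C" using g[of G] unfolding hbgood_def by blast
      next
        fix x a assume "(x,a) \<in> \<Union>C"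
        then obtain G where "G \<in> C" "(x,a) \<in> G" by blast
        then show "a \<le> p x" using g[of G] unfolding hbgood_def by blast
      qed (rule z)
      then show ?thesis by (simp add: \<A>_def)
    qed
  qed
  from Zorn_Lemma[OF this] obtain M where M: "M \<in> \<A>" and max: "\<And>X. X \<in> \<A> \<Longrightarrow> M \<subseteq> X \<Longrightarrow> X = M"
    by blast
  define G0 where "G0 = {(t *\<^sub>R z0, t) | t. True}"
  have z0ne: "z0 \<noteq> 0" using z0 p0 by auto
  have "hbgood p z0 G0" unfolding hbgood_def G0_def
  proof (intro conjI allI impI)
    fix x a b assume "(x, a) \<in> {(t *\<^sub>R z0, t) |t. True}" "(x, b) \<in> {(t *\<^sub>R z0, t) |t. True}"
    then have "a *\<^sub>R z0 = b *\<^sub>R z0" by auto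
    then show "a = b" using z0ne by (simp add: scaleR_cancel_right)
  next
    fix x a y b assume "(x, a) \<in> {(t *\<^sub>R z0, t) |t. True}" "(y, b) \<in> {(t *\<^sub>R z0, t) |t. True}"
    then show "(x + y, a + b) \<in> {(t *\<^sub>R z0, t) |t. True}"
      by (auto intro!: exI[of _ "a+b"] simp: scaleR_add_left)
  next
    fix x a c assume "(x, a) \<in> {(t *\<^sub>R z0, t) |t. True}"
    then show "(c *\<^sub>R x, c * a) \<in> {(t *\<^sub>R z0, t) |t. True}" by auto
  next
    fix x a assume "(x, a) \<in> {(t *\<^sub>R z0, t) |t. True}"
    then have x: "x = a *\<^sub>R z0" by auto
    show "a \<le> p x"
    proof (cases "a > 0")
      case True then show ?thesis using hom[OF True, of z0] z0 x
        by (simp add: mult_le_cancel_left1)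
    next
      case False then show ?thesis using nonneg[of x] by linarith
    qed
  next
    show "(z0, 1) \<in> {(t *\<^sub>R z0, t) |t. True}" by (auto intro!: exI[of _ 1])
  qed
  then have G0A: "G0 \<in> \<A>" by (simp add: \<A>_def)
  have Mne: "M \<noteq> {}"
  proof
    assume "M = {}"
    then have "G0 = M" using max[OF G0A] by simp
    then show False using \<open>hbgood p z0 G0\<close> \<open>M = {}\<close> unfolding hbgood_def by blast
  qed
  then have Mg: "hbgood p z0 M" using M \<A>_def by blast
  have full: "y \<in> fst ` M" for y
  proof (rule ccontr)
    assume "y \<notin> fst ` M"
    from hb_extend[OF sub hom Mg this] obtain M' where "hbgood p z0 M'" "M \<subseteq> M'" "M' \<noteq> M" by blast
    then show False using max[of M'] \<A>_def by blast
  qed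
  have sv: "\<And>x a b. (x,a)\<in>M \<Longrightarrow> (x,b)\<in>M \<Longrightarrow> a = b"
   and ad: "\<And>x a y b. (x,a)\<in>M \<Longrightarrow> (y,b)\<in>M \<Longrightarrow> (x+y, a+b) \<in> M"
   and sc: "\<And>x a c. (x,a)\<in>M \<Longrightarrow> (c *\<^sub>R x, c*a) \<in> M"
   and dom: "\<And>x a. (x,a)\<in>M \<Longrightarrow> a \<le> p x" and z: "(z0,1) \<in> M"
    using Mg unfolding hbgood_def by blast+
  define \<Lambda> where "\<Lambda> x = (THE a. (x,a) \<in> M)" for x
  have L: "(x, \<Lambda> x) \<in> M" for x
  proof -
    obtain a where xa: "(x,a) \<in> M" using full[of x] by force
    show ?thesis unfolding \<Lambda>_def using theI[of "\<lambda>b. (x,b)\<in>M" a] xa sv by blast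
  qed
  have Leq: "\<Lambda> x = a" if "(x,a) \<in> M" for x a using sv[OF L that] .
  have "linear \<Lambda>"
  proof (rule linearI)
    fix x y show "\<Lambda> (x + y) = \<Lambda> x + \<Lambda> y" using Leq[OF ad[OF L L]] .
  next
    fix c x show "\<Lambda> (c *\<^sub>R x) = c *\<^sub>R \<Lambda> x" using Leq[OF sc[OF L]] by simp
  qed
  moreover have "\<forall>x. \<Lambda> x \<le> p x" using dom[OF L] by blast
  moreover have "\<Lambda> z0 = 1" using Leq[OF z] .
  ultimately show ?thesis by blast
qed




lemma cont_real_crit:
  assumes "\<And>x e. x \<in> topspace X \<Longrightarrow> e > 0 \<Longrightarrow> \<exists>U. openin X U \<and> x \<in> U \<and> (\<forall>y\<in>U. \<bar>f y - f x\<bar> < e)"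
  shows "continuous_map X euclideanreal f"
  unfolding continuous_map_def
proof (intro conjI allI impI)
  show "f \<in> topspace X \<rightarrow> topspace euclideanreal" by simp
  fix U :: "real set" assume "openin euclideanreal U"
  then have oU: "open U" by simp
  show "openin X {x \<in> topspace X. f x \<in> U}"
  proof (subst openin_subopen, intro ballI)
    fix x assume x: "x \<in> {x \<in> topspace X. f x \<in> U}"
    have fxU: "f x \<in> U" using x by simp
    obtain e where e: "e > 0" "ball (f x) e \<subseteq> U" using oU fxU open_contains_ball by blast
    obtain W where W: "openin X W" "x \<in> W" "\<forall>y\<in>W. \<bar>f y - f x\<bar> < e" using assms[of x e] x e by blast
    have "W \<subseteq> {x \<in> topspace X. f x \<in> U}"
    proof
      fix y assume "y \<in> W"
      then have "\<bar>f y - f x\<bar> < e" using W(3) by blast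
      then have "f y \<in> ball (f x) e" by (metis abs_minus_commute dist_real_def mem_ball)
      then show "y \<in> {x \<in> topspace X. f x \<in> U}" using e \<open>y \<in> W\<close> openin_subset[OF W(1)] by blast
    qed
    then show "\<exists>T. openin X T \<and> x \<in> T \<and> T \<subseteq> {x \<in> topspace X. f x \<in> U}" using W by blast
  qed
qed

lemma convex_star0:
  assumes "convex D" "0 \<in> D" "d \<in> D" "0 \<le> l" "l \<le> 1"
  shows "l *\<^sub>R d \<in> D"
  using convexD[OF assms(1) assms(3) assms(2), of l "1 - l"] assms by simp

definition mink :: "'a::real_vector set \<Rightarrow> 'a \<Rightarrow> real" where
  "mink D y = Inf {r. r > 0 \<and> inverse r *\<^sub>R y \<in> D}"

locale gauge =
  fixes \<tau> :: "'a::real_vector topology" and D :: "'a set"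
  assumes tvs: "tvs \<tau>" and op: "openin \<tau> D" and cv: "convex D" and z: "0 \<in> D"
begin

lemma ne: "{r. r > 0 \<and> inverse r *\<^sub>R y \<in> D} \<noteq> {}"
proof -
  obtain t where t: "t > 0" "\<forall>s. \<bar>s\<bar> < t \<longrightarrow> s *\<^sub>R y \<in> D" using tvs_absorb[OF tvs op z] by blast
  then have "inverse (2 / t) *\<^sub>R y \<in> D" by auto
  moreover have "2 / t > 0" using t by simp
  ultimately show ?thesis by blast
qed

lemma bdd: "bdd_below {r. r > 0 \<and> inverse r *\<^sub>R y \<in> D}"
  by (rule bdd_belowI[of _ 0]) auto

lemma nonneg: "mink D y \<ge> 0"
  unfolding mink_def by (rule cInf_greatest[OF ne]) auto

lemma le: "r > 0 \<Longrightarrow> inverse r *\<^sub>R y \<in> D \<Longrightarrow> mink D y \<le> r"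
  unfolding mink_def by (rule cInf_lower[OF _ bdd]) auto

lemma mem: assumes "r > mink D y" shows "inverse r *\<^sub>R y \<in> D"
proof -
  obtain r' where r': "r' \<in> {r. r > 0 \<and> inverse r *\<^sub>R y \<in> D}" "r' < r"
    using cInf_lessD[OF ne] assms unfolding mink_def by blast
  have d: "inverse r' *\<^sub>R y \<in> D" using r'(1) by blast
  have X: "(r' / r) *\<^sub>R (inverse r' *\<^sub>R y) \<in> D"
    by (rule convex_star0[OF cv z d]) (use r' in auto)
  have co: "r' / r * inverse r' = inverse r" using r' by (auto simp: field_simps)
  have c: "(r' / r) *\<^sub>R (inverse r' *\<^sub>R y) = inverse r *\<^sub>R y" by (simp only: scaleR_scaleR co)
  from X show ?thesis unfolding c .
qed

lemma lt1_mem: "mink D y < 1 \<Longrightarrow> y \<in> D"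
  using mem[of y 1] by simp

lemma mem_lt1: assumes "y \<in> D" shows "mink D y < 1"
proof -
  obtain e where e: "e > 0" "(1 + e) *\<^sub>R y \<in> D" using tvs_open_expand[OF tvs op assms] by blast
  then have "mink D y \<le> inverse (1 + e)" by (intro le) auto
  also have "\<dots> < 1" using e by (simp add: field_simps)
  finally show ?thesis .
qed

lemma subadd: "mink D (y + z) \<le> mink D y + mink D z"
proof (rule field_le_epsilon)
  fix e :: real assume e: "e > 0"
  define r1 where "r1 = mink D y + e/2"
  define r2 where "r2 = mink D z + e/2"
  have r: "r1 > 0" "r2 > 0" using nonneg[of y] nonneg[of z] e r1_def r2_def by auto
  have m1: "inverse r1 *\<^sub>R y \<in> D" using mem e r1_def by simp
  have m2: "inverse r2 *\<^sub>R z \<in> D" using mem e r2_def by simp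
  have "(r1 / (r1 + r2)) *\<^sub>R (inverse r1 *\<^sub>R y) + (r2 / (r1 + r2)) *\<^sub>R (inverse r2 *\<^sub>R z) \<in> D"
  proof (rule convexD[OF cv m1 m2])
    show "0 \<le> r1 / (r1 + r2)" "0 \<le> r2 / (r1 + r2)" using r by auto
    show "r1 / (r1 + r2) + r2 / (r1 + r2) = 1" by (subst add_divide_distrib[symmetric]) (use r in simp)
  qed
  moreover have "(r1 / (r1 + r2)) *\<^sub>R (inverse r1 *\<^sub>R y) + (r2 / (r1 + r2)) *\<^sub>R (inverse r2 *\<^sub>R z)
      = inverse (r1 + r2) *\<^sub>R (y + z)"
  proof -
    have s: "r1 + r2 \<noteq> 0" using r by simp
    have c1: "r1 / (r1 + r2) * inverse r1 = inverse (r1 + r2)" using r s by (simp add: field_simps)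
    have c2: "r2 / (r1 + r2) * inverse r2 = inverse (r1 + r2)" using r s by (simp add: field_simps)
    show ?thesis by (simp only: scaleR_scaleR c1 c2 scaleR_add_right)
  qed
  ultimately have "mink D (y + z) \<le> r1 + r2" using r by (intro le) auto
  then show "mink D (y + z) \<le> mink D y + mink D z + e" using r1_def r2_def by simp
qed

lemma hom_le: assumes "t > 0" shows "mink D (t *\<^sub>R y) \<le> t * mink D y"
proof -
  have "mink D (t *\<^sub>R y) / t \<le> mink D y"
  proof (rule dense_ge)
    fix r assume r: "mink D y < r"
    then have m: "inverse r *\<^sub>R y \<in> D" by (rule mem)
    have rp: "r > 0" using r nonneg[of y] by simp
    have coef: "inverse (t * r) * t = inverse r" using assms rp by (simp add: field_simps)
    have eq: "inverse (t * r) *\<^sub>R (t *\<^sub>R y) = inverse r *\<^sub>R y" by (simp only: scaleR_scaleR coef)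
    have tr: "t * r > 0" using r nonneg[of y] assms by simp
    have "inverse (t * r) *\<^sub>R (t *\<^sub>R y) \<in> D" unfolding eq by (rule m)
    then have "mink D (t *\<^sub>R y) \<le> t * r" using tr by (intro le) auto
    then show "mink D (t *\<^sub>R y) / t \<le> r" using assms by (simp add: field_simps)
  qed
  then show ?thesis using assms by (simp add: field_simps)
qed

lemma hom: assumes "t > 0" shows "mink D (t *\<^sub>R y) = t * mink D y"
proof -
  have "mink D y \<le> inverse t * mink D (t *\<^sub>R y)"
    using hom_le[of "inverse t" "t *\<^sub>R y"] assms by simp
  then have "t * mink D y \<le> mink D (t *\<^sub>R y)" using assms by (simp add: field_simps)
  then show ?thesis using hom_le[OF assms, of y] by linarith
qed

end

lemma separation:
  fixes \<tau> :: "'a::real_vector topology"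
  assumes tvs: "tvs \<tau>" and K: "convex K" and V: "openin \<tau> V" "convex V" "0 \<in> V"
    and disj: "\<forall>k\<in>K. \<forall>v\<in>V. p + v \<noteq> k"
  shows "\<exists>\<Lambda> \<alpha>. linear \<Lambda> \<and> continuous_map \<tau> euclideanreal \<Lambda> \<and> (\<forall>k\<in>K. \<Lambda> k \<le> \<alpha>) \<and> \<alpha> < \<Lambda> p"
proof (cases "K = {}")
  case True
  then show ?thesis by (intro exI[of _ "\<lambda>_. 0"] exI[of _ "-1"]) (auto intro: linearI)
next
  case False
  then obtain k0 where k0: "k0 \<in> K" by blast
  define D where "D = {k - v - k0 | k v. k \<in> K \<and> v \<in> V}"
  have oV: "openin \<tau> (uminus ` V)" using tvs_open_scal[OF tvs V(1), of "-1"] by simp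
  have D_eq: "D = (\<Union>k\<in>K. (\<lambda>u. u + (k - k0)) ` (uminus ` V))"
    unfolding D_def by (auto simp: image_iff) (metis add_uminus_conv_diff diff_add_eq uminus_add_conv_diff)+
  have oD: "openin \<tau> D" unfolding D_eq
    by (intro openin_Union) (auto intro!: tvs_open_transl[OF tvs] oV)
  have cD: "convex D" unfolding convex_def
  proof (intro ballI allI impI)
    fix x y and u w :: real assume xy: "x \<in> D" "y \<in> D"
      and uw: "0 \<le> u" "0 \<le> w" "u + w = 1"
    then obtain k1 v1 k2 v2 where e: "x = k1 - v1 - k0" "y = k2 - v2 - k0" "k1 \<in> K" "k2 \<in> K" "v1 \<in> V" "v2 \<in> V"
      unfolding D_def by blast
    have "u *\<^sub>R x + w *\<^sub>R y = (u *\<^sub>R k1 + w *\<^sub>R k2) - (u *\<^sub>R v1 + w *\<^sub>R v2) - (u + w) *\<^sub>R k0"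
      unfolding e(1,2) by (simp add: algebra_simps)
    also have "\<dots> = (u *\<^sub>R k1 + w *\<^sub>R k2) - (u *\<^sub>R v1 + w *\<^sub>R v2) - k0" using uw by simp
    finally show "u *\<^sub>R x + w *\<^sub>R y \<in> D"
      using convexD[OF K e(3,4)] convexD[OF V(2) e(5,6)] uw unfolding D_def by blast
  qed
  have zD: "0 \<in> D" unfolding D_def using k0 V(3) by force
  have gg: "gauge \<tau> D" by (rule gauge.intro[OF tvs oD cD zD])
  interpret g: gauge \<tau> D by (rule gg)
  define z0 where "z0 = p - k0"
  have "z0 \<notin> D"
  proof
    assume "z0 \<in> D"
    then obtain k v where "k \<in> K" "v \<in> V" "p - k0 = k - v - k0" unfolding D_def z0_def by blast
    then have "p + v = k" by (simp add: algebra_simps)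
    then show False using disj \<open>k \<in> K\<close> \<open>v \<in> V\<close> by blast
  qed
  then have "mink D z0 \<ge> 1" using g.lt1_mem by force
  from hahn_banach[OF g.nonneg g.subadd g.hom this]
  obtain \<Lambda> where L: "linear \<Lambda>" "\<And>x. \<Lambda> x \<le> mink D x" "\<Lambda> z0 = 1" by blast
  have Lb: "\<bar>\<Lambda> w\<bar> < 1" if "w \<in> D" "-w \<in> D" for w
  proof -
    have "\<Lambda> w < 1" using L(2)[of w] g.mem_lt1[OF that(1)] by simp
    moreover have "\<Lambda> (-w) < 1" using L(2)[of "-w"] g.mem_lt1[OF that(2)] by simp
    moreover have "\<Lambda> (-w) = - \<Lambda> w" using linear_neg[OF L(1)] by simp
    ultimately show ?thesis by simp
  qed
  have cont: "continuous_map \<tau> euclideanreal \<Lambda>"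
  proof (rule cont_real_crit)
    fix x and e :: real assume e: "e > 0"
    define W where "W = D \<inter> (\<lambda>y. (-1) *\<^sub>R y) ` D"
    have oW: "openin \<tau> W" unfolding W_def using oD by (intro openin_Int tvs_open_scal[OF tvs]) auto
    define U where "U = (\<lambda>u. u + x) ` ((\<lambda>y. e *\<^sub>R y) ` W)"
    have "openin \<tau> U" unfolding U_def using e by (intro tvs_open_transl[OF tvs] tvs_open_scal[OF tvs oW]) auto
    moreover have "x \<in> U" unfolding U_def W_def using zD by (force simp: image_iff)
    moreover have "\<forall>y\<in>U. \<bar>\<Lambda> y - \<Lambda> x\<bar> < e"
    proof
      fix y assume "y \<in> U"
      then obtain w where w: "w \<in> D" "-w \<in> D" "y = e *\<^sub>R w + x" unfolding U_def W_def by (auto simp: image_iff)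
      then have "\<Lambda> y - \<Lambda> x = e * \<Lambda> w" using L(1) by (simp add: linear_add linear_scale)
      then show "\<bar>\<Lambda> y - \<Lambda> x\<bar> < e" using Lb[OF w(1,2)] e by (simp add: abs_mult)
    qed
    ultimately show "\<exists>U. openin \<tau> U \<and> x \<in> U \<and> (\<forall>y\<in>U. \<bar>\<Lambda> y - \<Lambda> x\<bar> < e)" by blast
  qed
  obtain t where t: "t > 0" "\<forall>s. \<bar>s\<bar> < t \<longrightarrow> s *\<^sub>R z0 \<in> V" using tvs_absorb[OF tvs V(1) V(3)] by blast
  define v0 where "v0 = (- t / 2) *\<^sub>R z0"
  have v0: "v0 \<in> V" unfolding v0_def using t by (intro t(2)[rule_format]) simp
  have Lv0: "\<Lambda> v0 = - t / 2" unfolding v0_def using L(1,3) linear_scale[OF L(1), of "- t / 2" z0] by simp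
  have "\<Lambda> k \<le> \<Lambda> k0 + 1 - t/2" if "k \<in> K" for k
  proof -
    have "k - v0 - k0 \<in> D" unfolding D_def using that v0 by blast
    then have "\<Lambda> (k - v0 - k0) < 1" using L(2) g.mem_lt1 by (meson le_less_trans)
    then show ?thesis using Lv0 L(1) by (simp add: linear_diff)
  qed
  moreover have "\<Lambda> p = \<Lambda> k0 + 1" using L(1,3) z0_def by (simp add: linear_diff)
  ultimately show ?thesis using L(1) cont t(1)
    by (intro exI[of _ \<Lambda>] exI[of _ "\<Lambda> k0 + 1 - t/2"]) auto
qed




lemma tube:
  fixes \<tau> :: "'a::real_vector topology"
  assumes tvs: "tvs \<tau>" and cpt: "compactin \<tau> \<Sigma>" and cl: "closedin \<tau> E" and dj: "\<Sigma> \<inter> E = {}"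
  shows "\<exists>V. openin \<tau> V \<and> convex V \<and> 0 \<in> V \<and> (\<forall>s\<in>\<Sigma>. \<forall>v\<in>V. s + v \<notin> E)"
proof (cases "\<Sigma> = {}")
  case True
  have "openin \<tau> UNIV" using openin_topspace[of \<tau>] tvs_top[OF tvs] by simp
  then show ?thesis using True by (intro exI[of _ UNIV]) auto
next
  case False
  have oU: "openin \<tau> (UNIV - E)" using cl tvs_top[OF tvs] by (simp add: closedin_def)
  have "\<forall>s\<in>\<Sigma>. \<exists>W. openin \<tau> W \<and> 0 \<in> W \<and> (\<forall>a\<in>W. \<forall>b\<in>W. s + a + b \<notin> E)"
  proof
    fix s assume s: "s \<in> \<Sigma>"
    have c: "continuous_map (prod_topology \<tau> \<tau>) \<tau> (\<lambda>z. (case z of (a, b) \<Rightarrow> a + b) + s)"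
      using continuous_map_compose[OF tvs_add_cont[OF tvs] tvs_transl_cont[OF tvs, of s]] by (simp add: o_def)
    define S where "S = {z \<in> topspace (prod_topology \<tau> \<tau>). (case z of (a, b) \<Rightarrow> a + b) + s \<in> UNIV - E}"
    have oS: "openin (prod_topology \<tau> \<tau>) S"
      unfolding S_def by (rule openin_continuous_map_preimage[OF c oU])
    have "s \<notin> E" using s dj by blast
    then have S0: "(0, 0) \<in> S" unfolding S_def using tvs_top[OF tvs] by simp
    from oS[unfolded openin_prod_topology_alt, rule_format, OF S0]
    obtain A B where AB: "openin \<tau> A" "openin \<tau> B" "0 \<in> A" "0 \<in> B" "A \<times> B \<subseteq> S"
      by blast
    have "\<forall>a\<in>A \<inter> B. \<forall>b\<in>A \<inter> B. s + a + b \<notin> E"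
    proof (intro ballI)
      fix a b assume "a \<in> A \<inter> B" "b \<in> A \<inter> B"
      then have "(a, b) \<in> A \<times> B" by auto
      then have "(a, b) \<in> S" using AB(5) by blast
      then have "a + b + s \<notin> E" unfolding S_def by simp
      then show "s + a + b \<notin> E" by (simp add: algebra_simps)
    qed
    then show "\<exists>W. openin \<tau> W \<and> 0 \<in> W \<and> (\<forall>a\<in>W. \<forall>b\<in>W. s + a + b \<notin> E)"
      using AB by (intro exI[of _ "A \<inter> B"]) auto
  qed
  from bchoice[OF this] obtain W where W0: "\<forall>s\<in>\<Sigma>. openin \<tau> (W s) \<and> 0 \<in> W s \<and> (\<forall>a\<in>W s. \<forall>b\<in>W s. s + a + b \<notin> E)"
    by blast
  then have W: "\<And>s. s \<in> \<Sigma> \<Longrightarrow> openin \<tau> (W s)" "\<And>s. s \<in> \<Sigma> \<Longrightarrow> 0 \<in> W s"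
    "\<And>s a b. s \<in> \<Sigma> \<Longrightarrow> a \<in> W s \<Longrightarrow> b \<in> W s \<Longrightarrow> s + a + b \<notin> E"
    by blast+
  define \<U> where "\<U> = (\<lambda>s. (\<lambda>y. y + s) ` W s) ` \<Sigma>"
  have "\<forall>U\<in>\<U>. openin \<tau> U" unfolding \<U>_def using W(1) tvs_open_transl[OF tvs] by blast
  moreover have "\<Sigma> \<subseteq> \<Union>\<U>"
  proof
    fix s assume "s \<in> \<Sigma>"
    then have "s \<in> (\<lambda>y. y + s) ` W s" using W(2)[of s] by (force simp: image_iff)
    then show "s \<in> \<Union>\<U>" unfolding \<U>_def using \<open>s \<in> \<Sigma>\<close> by blast
  qed
  moreover have "(\<forall>U \<in> \<U>. openin \<tau> U) \<and> \<Sigma> \<subseteq> \<Union>\<U> \<longrightarrow> (\<exists>\<F>. finite \<F> \<and> \<F> \<subseteq> \<U> \<and> \<Sigma> \<subseteq> \<Union>\<F>)"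
    using cpt unfolding compactin_def by (elim conjE) (rule spec)
  ultimately have "\<exists>\<F>. finite \<F> \<and> \<F> \<subseteq> \<U> \<and> \<Sigma> \<subseteq> \<Union>\<F>" by blast
  then obtain \<F> where F: "finite \<F>" "\<F> \<subseteq> \<U>" "\<Sigma> \<subseteq> \<Union>\<F>" by blast
  obtain S0 where S0: "S0 \<subseteq> \<Sigma>" "finite S0" "\<F> = (\<lambda>s. (\<lambda>y. y + s) ` W s) ` S0"
    using finite_subset_image[OF F(1) F(2)[unfolded \<U>_def]] by blast
  have S0ne: "S0 \<noteq> {}" using S0 F False by auto
  have "openin \<tau> (\<Inter>(W ` S0))"
    using S0 S0ne W(1) by (intro openin_Inter) auto
  moreover have "0 \<in> \<Inter>(W ` S0)" using S0 W(2) by auto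
  ultimately obtain V where V: "openin \<tau> V" "convex V" "0 \<in> V" "V \<subseteq> \<Inter>(W ` S0)"
    using tvs_lc[OF tvs] by meson
  have "\<forall>s\<in>\<Sigma>. \<forall>v\<in>V. s + v \<notin> E"
  proof (intro ballI)
    fix s v assume sv: "s \<in> \<Sigma>" "v \<in> V"
    then obtain s0 y where "s0 \<in> S0" "y \<in> W s0" "s = y + s0" using F(3) S0(3) by auto
    moreover have "v \<in> W s0" using V(4) sv \<open>s0 \<in> S0\<close> by auto
    ultimately have "s0 + y + v \<notin> E" using W(3) S0(1) by blast
    then show "s + v \<notin> E" using \<open>s = y + s0\<close> by (simp add: algebra_simps)
  qed
  then show ?thesis using V by blast
qed

lemma tvs_prod:
  assumes tvs: "tvs \<tau>"
  shows "tvs (prod_topology \<tau> euclideanreal)"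
  unfolding tvs_def
proof (intro conjI allI impI)
  show "topspace (prod_topology \<tau> euclideanreal) = UNIV" using tvs_top[OF tvs] by simp
next
  let ?P = "prod_topology \<tau> euclideanreal"
  have ff: "continuous_map (prod_topology ?P ?P) \<tau> (\<lambda>z. fst (fst z))"
    by (rule continuous_map_compose[OF continuous_map_fst continuous_map_fst, unfolded o_def])
  have fs: "continuous_map (prod_topology ?P ?P) \<tau> (\<lambda>z. fst (snd z))"
    by (rule continuous_map_compose[OF continuous_map_snd continuous_map_fst, unfolded o_def])
  have sf: "continuous_map (prod_topology ?P ?P) euclideanreal (\<lambda>z. snd (fst z))"
    by (rule continuous_map_compose[OF continuous_map_fst continuous_map_snd, unfolded o_def])
  have ss: "continuous_map (prod_topology ?P ?P) euclideanreal (\<lambda>z. snd (snd z))"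
    by (rule continuous_map_compose[OF continuous_map_snd continuous_map_snd, unfolded o_def])
  have c1: "continuous_map (prod_topology ?P ?P) \<tau> (\<lambda>z. fst (fst z) + fst (snd z))"
    using continuous_map_compose[OF continuous_map_pairedI[OF ff fs] tvs_add_cont[OF tvs]] by (simp add: o_def)
  have c2: "continuous_map (prod_topology ?P ?P) euclideanreal (\<lambda>z. snd (fst z) + snd (snd z))"
    using sf ss by (rule continuous_map_add)
  have "(\<lambda>(x, y). x + y) = (\<lambda>z::('a \<times> real) \<times> ('a \<times> real). (fst (fst z) + fst (snd z), snd (fst z) + snd (snd z)))"
    by (auto simp: fun_eq_iff)
  then show "continuous_map (prod_topology ?P ?P) ?P (\<lambda>(x, y). x + y)"
    using continuous_map_pairedI[OF c1 c2] by simp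
next
  let ?P = "prod_topology \<tau> euclideanreal"
  have a: "continuous_map (prod_topology euclideanreal ?P) euclideanreal (\<lambda>z. fst z)"
    by (rule continuous_map_fst)
  have fs: "continuous_map (prod_topology euclideanreal ?P) \<tau> (\<lambda>z. fst (snd z))"
    by (rule continuous_map_compose[OF continuous_map_snd continuous_map_fst, unfolded o_def])
  have ss: "continuous_map (prod_topology euclideanreal ?P) euclideanreal (\<lambda>z. snd (snd z))"
    by (rule continuous_map_compose[OF continuous_map_snd continuous_map_snd, unfolded o_def])
  have c1: "continuous_map (prod_topology euclideanreal ?P) \<tau> (\<lambda>z. fst z *\<^sub>R fst (snd z))"
    using continuous_map_compose[OF continuous_map_pairedI[OF a fs] tvs_smult_cont[OF tvs]] by (simp add: o_def)
  have c2: "continuous_map (prod_topology euclideanreal ?P) euclideanreal (\<lambda>z. fst z * snd (snd z))"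
    using a ss by (rule continuous_map_real_mult)
  have "(\<lambda>(a, x). a *\<^sub>R x) = (\<lambda>z::real \<times> ('a \<times> real). (fst z *\<^sub>R fst (snd z), fst z * snd (snd z)))"
    by (auto simp: fun_eq_iff)
  then show "continuous_map (prod_topology euclideanreal ?P) ?P (\<lambda>(a, x). a *\<^sub>R x)"
    using continuous_map_pairedI[OF c1 c2] by simp
next
  fix U :: "('a \<times> real) set" and x assume "openin (prod_topology \<tau> euclideanreal) U \<and> x \<in> U"
  then obtain A B where AB: "openin \<tau> A" "openin euclideanreal B" "fst x \<in> A" "snd x \<in> B" "A \<times> B \<subseteq> U"
    unfolding openin_prod_topology_alt by (metis prod.collapse)
  obtain A' where A': "openin \<tau> A'" "convex A'" "fst x \<in> A'" "A' \<subseteq> A" using tvs_lc[OF tvs AB(1,3)] by blast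
  obtain e where e: "e > 0" "ball (snd x) e \<subseteq> B" using AB(2,4) by (auto simp: open_contains_ball)
  show "\<exists>V. openin (prod_topology \<tau> euclideanreal) V \<and> convex V \<and> x \<in> V \<and> V \<subseteq> U"
    using A' e AB(5) by (intro exI[of _ "A' \<times> ball (snd x) e"])
      (auto simp: openin_prod_Times_iff convex_Times mem_Times_iff)
qed

lemma box_lemma:
  fixes U :: "('b \<Rightarrow> real) set"
  assumes "open U" "f \<in> U"
  shows "\<exists>Z e. finite Z \<and> e > 0 \<and> {g. \<forall>z\<in>Z. \<bar>g z - f z\<bar> < e} \<subseteq> U"
proof -
  have "openin (product_topology (\<lambda>_. euclideanreal) UNIV) U"
    using assms(1) by (simp add: euclidean_product_topology)
  then obtain W where W: "finite {i. W i \<noteq> UNIV}" "\<And>i. open (W i)" "f \<in> Pi\<^sub>E UNIV W" "Pi\<^sub>E UNIV W \<subseteq> U"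
    using assms(2) unfolding openin_product_topology_alt by auto
  define Z where "Z = {i. W i \<noteq> UNIV}"
  have "\<forall>i. \<exists>e>0. ball (f i) e \<subseteq> W i"
    using W(2,3) by (metis PiE_iff UNIV_I open_contains_ball)
  then obtain ee where ee: "\<And>i. ee i > 0" "\<And>i. ball (f i) (ee i) \<subseteq> W i" by metis
  define e where "e = (if Z = {} then 1 else Min (ee ` Z))"
  have e0: "e > 0" unfolding e_def using W(1) ee(1) Z_def by auto
  have eZ: "e \<le> ee i" if "i \<in> Z" for i unfolding e_def using that W(1) Z_def by auto
  have "{g. \<forall>z\<in>Z. \<bar>g z - f z\<bar> < e} \<subseteq> Pi\<^sub>E UNIV W"
  proof
    fix g assume g: "g \<in> {g. \<forall>z\<in>Z. \<bar>g z - f z\<bar> < e}"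
    have "g i \<in> W i" for i
    proof (cases "i \<in> Z")
      case True
      then have "g i \<in> ball (f i) (ee i)" using g eZ[OF True] by (auto simp: dist_real_def)
      then show ?thesis using ee(2) by blast
    next
      case False then show ?thesis unfolding Z_def by auto
    qed
    then show "g \<in> Pi\<^sub>E UNIV W" by auto
  qed
  then show ?thesis using W(1,4) e0 Z_def by (intro exI[of _ Z] exI[of _ e]) auto
qed

lemma box_open:
  fixes f :: "'b \<Rightarrow> real"
  assumes "finite Z"
  shows "open {g. \<forall>z\<in>Z. \<bar>g z - f z\<bar> < e}"
proof -
  have "openin (product_topology (\<lambda>_. euclideanreal) UNIV) {g. \<forall>z\<in>Z. \<bar>g z - f z\<bar> < e}"
    unfolding openin_product_topology_alt
  proof (intro ballI)
    fix g assume g: "g \<in> {g. \<forall>z\<in>Z. \<bar>g z - f z\<bar> < e}"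
    define W where "W i = (if i \<in> Z then {r. \<bar>r - f i\<bar> < e} else UNIV)" for i
    have "finite {i \<in> UNIV. W i \<noteq> topspace euclideanreal}"
      by (rule finite_subset[OF _ assms]) (auto simp: W_def)
    moreover have "\<forall>i\<in>UNIV. openin euclideanreal (W i)"
    proof
      fix i
      have "open {r. \<bar>r - f i\<bar> < e}"
        using open_ball[of "f i" e] by (simp add: ball_def dist_real_def abs_minus_commute)
      then show "openin euclideanreal (W i)" by (simp add: W_def)
    qed
    moreover have "g \<in> Pi\<^sub>E UNIV W" using g by (auto simp: W_def)
    moreover have "Pi\<^sub>E UNIV W \<subseteq> {g. \<forall>z\<in>Z. \<bar>g z - f z\<bar> < e}"
    proof
      fix h assume "h \<in> Pi\<^sub>E UNIV W"
      then have hz: "h z \<in> W z" for z by (simp add: PiE_iff)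
      show "h \<in> {g. \<forall>z\<in>Z. \<bar>g z - f z\<bar> < e}"
      proof (intro CollectI ballI)
        fix z assume "z \<in> Z" then show "\<bar>h z - f z\<bar> < e" using hz[of z] by (simp add: W_def)
      qed
    qed
    ultimately show "\<exists>U. finite {i \<in> UNIV. U i \<noteq> topspace euclideanreal} \<and>
             (\<forall>i\<in>UNIV. openin euclideanreal (U i)) \<and> g \<in> Pi\<^sub>E UNIV U \<and> Pi\<^sub>E UNIV U \<subseteq> {g. \<forall>z\<in>Z. \<bar>g z - f z\<bar> < e}"
      by blast
  qed
  then show ?thesis by (simp add: euclidean_product_topology)
qed

lemma box_convex:
  fixes f :: "'b \<Rightarrow> real"
  shows "convex {g. \<forall>z\<in>Z. \<bar>g z - f z\<bar> < e}"
proof -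
  have "{g. \<forall>z\<in>Z. \<bar>g z - f z\<bar> < e} = (\<Inter>z\<in>Z. (\<lambda>g. g z) -` {r. \<bar>r - f z\<bar> < e})" by auto
  moreover have "convex ((\<lambda>g. g z) -` {r. \<bar>r - f z\<bar> < e})" for z
  proof (rule convex_linear_vimage)
    show "linear (\<lambda>g::'b \<Rightarrow> real. g z)" by (rule linearI) auto
    have "{r. \<bar>r - f z\<bar> < e} = ball (f z) e" by (auto simp: ball_def dist_real_def abs_minus_commute)
    then show "convex {r. \<bar>r - f z\<bar> < e}" by simp
  qed
  ultimately show ?thesis by (simp add: convex_INT)
qed

lemma proj_cont: "continuous_map euclidean euclideanreal (\<lambda>g::'b \<Rightarrow> real. g z)"
  using continuous_map_product_projection[of z UNIV "\<lambda>_. euclideanreal"]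
  by (simp add: euclidean_product_topology)

lemma tvs_fun: "tvs (euclidean :: ('b \<Rightarrow> real) topology)"
  unfolding tvs_def
proof (intro conjI allI impI)
  show "topspace (euclidean :: ('b \<Rightarrow> real) topology) = UNIV" by simp
next
  have "continuous_map (prod_topology euclidean euclidean) (product_topology (\<lambda>_. euclideanreal) UNIV)
      (\<lambda>z::('b \<Rightarrow> real) \<times> ('b \<Rightarrow> real). (case z of (x, y) \<Rightarrow> x + y))"
    unfolding continuous_map_componentwise_UNIV
  proof
    fix k
    have "continuous_map (prod_topology euclidean euclidean) euclideanreal (\<lambda>z::('b \<Rightarrow> real) \<times> ('b \<Rightarrow> real). fst z k + snd z k)"
      by (intro continuous_map_add continuous_map_compose[OF continuous_map_fst proj_cont, unfolded o_def]
          continuous_map_compose[OF continuous_map_snd proj_cont, unfolded o_def])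
    then show "continuous_map (prod_topology euclidean euclidean) euclideanreal (\<lambda>z::('b \<Rightarrow> real) \<times> ('b \<Rightarrow> real). (case z of (x, y) \<Rightarrow> x + y) k)"
      by (simp add: case_prod_beta)
  qed
  then show "continuous_map (prod_topology euclidean euclidean) euclidean (\<lambda>(x::'b \<Rightarrow> real, y). x + y)"
    by (simp add: euclidean_product_topology)
next
  have "continuous_map (prod_topology euclideanreal euclidean) (product_topology (\<lambda>_. euclideanreal) UNIV)
      (\<lambda>z::real \<times> ('b \<Rightarrow> real). (case z of (a, x) \<Rightarrow> a *\<^sub>R x))"
    unfolding continuous_map_componentwise_UNIV
  proof
    fix k
    have "continuous_map (prod_topology euclideanreal euclidean) euclideanreal (\<lambda>z::real \<times> ('b \<Rightarrow> real). fst z * snd z k)"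
      by (intro continuous_map_real_mult continuous_map_fst
          continuous_map_compose[OF continuous_map_snd proj_cont, unfolded o_def])
    then show "continuous_map (prod_topology euclideanreal euclidean) euclideanreal (\<lambda>z::real \<times> ('b \<Rightarrow> real). (case z of (a, x) \<Rightarrow> a *\<^sub>R x) k)"
      by (simp add: case_prod_beta)
  qed
  then show "continuous_map (prod_topology euclideanreal euclidean) euclidean (\<lambda>(a, x::'b \<Rightarrow> real). a *\<^sub>R x)"
    by (simp add: euclidean_product_topology)
next
  fix U :: "('b \<Rightarrow> real) set" and x assume "openin euclidean U \<and> x \<in> U"
  then obtain Z e where Ze: "finite Z" "e > 0" "{g. \<forall>z\<in>Z. \<bar>g z - x z\<bar> < e} \<subseteq> U"
    using box_lemma[of U x] by auto
  show "\<exists>V. openin euclidean V \<and> convex V \<and> x \<in> V \<and> V \<subseteq> U"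
    using Ze box_open[OF Ze(1), of x e] box_convex[of Z x e]
    by (intro exI[of _ "{g. \<forall>z\<in>Z. \<bar>g z - x z\<bar> < e}"]) auto
qed

lemma sum_fun_apply: "(\<Sum>i\<in>A. f i) x = (\<Sum>i\<in>A. f i x)"
  by (induction A rule: infinite_finite_induct) auto

lemma fun_rep:
  fixes \<Lambda> :: "('b \<Rightarrow> real) \<Rightarrow> real"
  assumes lin: "linear \<Lambda>" and cont: "continuous_map euclidean euclideanreal \<Lambda>"
  shows "\<exists>Z a. finite Z \<and> (\<forall>\<psi>. \<Lambda> \<psi> = (\<Sum>z\<in>Z. a z * \<psi> z))"
proof -
  have "openin euclidean {\<psi> \<in> topspace euclidean. \<Lambda> \<psi> \<in> {r. \<bar>r\<bar> < 1}}"
  proof (rule openin_continuous_map_preimage[OF cont])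
    have "{r::real. \<bar>r\<bar> < 1} = ball 0 1" by (auto simp: ball_def dist_real_def)
    then show "openin euclideanreal {r. \<bar>r\<bar> < 1}" by simp
  qed
  then have o1: "open {\<psi>. \<bar>\<Lambda> \<psi>\<bar> < 1}" by simp
  have z1: "0 \<in> {\<psi>. \<bar>\<Lambda> \<psi>\<bar> < 1}" using linear_0[OF lin] by simp
  obtain Z e where Ze: "finite Z" "e > 0" "{g. \<forall>z\<in>Z. \<bar>g z - 0 z\<bar> < e} \<subseteq> {\<psi>. \<bar>\<Lambda> \<psi>\<bar> < 1}"
    using box_lemma[OF o1 z1] by blast
  have van: "\<Lambda> \<psi> = 0" if "\<forall>z\<in>Z. \<psi> z = 0" for \<psi>
  proof (rule ccontr)
    assume ne: "\<Lambda> \<psi> \<noteq> 0"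
    define n where "n = 2 / \<bar>\<Lambda> \<psi>\<bar>"
    have "n *\<^sub>R \<psi> \<in> {g. \<forall>z\<in>Z. \<bar>g z - 0 z\<bar> < e}" using that Ze(2) by simp
    then have "\<bar>\<Lambda> (n *\<^sub>R \<psi>)\<bar> < 1" using Ze(3) by blast
    moreover have "\<bar>\<Lambda> (n *\<^sub>R \<psi>)\<bar> = 2" using ne linear_scale[OF lin, of n \<psi>]
      by (simp add: n_def abs_mult)
    ultimately show False by simp
  qed
  define ev where "ev z = (\<lambda>u::'b. if u = z then 1 else 0 :: real)" for z
  have "\<Lambda> \<psi> = (\<Sum>z\<in>Z. \<Lambda> (ev z) * \<psi> z)" for \<psi>
  proof -
    define hh where "hh = (\<Sum>z\<in>Z. \<psi> z *\<^sub>R ev z)"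
    have hhz: "hh z' = \<psi> z'" if "z' \<in> Z" for z'
    proof -
      have "hh z' = (\<Sum>z\<in>Z. \<psi> z * ev z z')" unfolding hh_def sum_fun_apply by simp
      also have "\<dots> = (\<Sum>z\<in>Z. if z = z' then \<psi> z else 0)" by (intro sum.cong) (auto simp: ev_def)
      also have "\<dots> = \<psi> z'" using that Ze(1) by (simp add: sum.delta')
      finally show ?thesis .
    qed
    have "\<Lambda> (\<psi> - hh) = 0" using hhz by (intro van) auto
    then have "\<Lambda> \<psi> = \<Lambda> hh" using linear_diff[OF lin] by simp
    also have "\<Lambda> hh = (\<Sum>z\<in>Z. \<psi> z * \<Lambda> (ev z))" unfolding hh_def
      by (simp add: linear_sum[OF lin] linear_scale[OF lin])
    finally show ?thesis by (simp add: mult.commute)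
  qed
  then have rep: "\<forall>\<psi>. \<Lambda> \<psi> = (\<Sum>z\<in>Z. \<Lambda> (ev z) * \<psi> z)" by blast
  show ?thesis
  proof (intro exI conjI)
    show "finite Z" by (rule Ze(1))
    show "\<forall>\<psi>. \<Lambda> \<psi> = (\<Sum>z\<in>Z. \<Lambda> (ev z) * \<psi> z)" by (rule rep)
  qed
qed




definition epiconv :: "('a::real_vector \<Rightarrow> ereal) \<Rightarrow> bool" where
  "epiconv g \<longleftrightarrow> (\<forall>y1 y2 r1 r2 u. g y1 \<le> ereal r1 \<longrightarrow> g y2 \<le> ereal r2 \<longrightarrow> 0 \<le> u \<longrightarrow> u \<le> 1 \<longrightarrow>
      g ((1 - u) *\<^sub>R y1 + u *\<^sub>R y2) \<le> ereal ((1 - u) * r1 + u * r2))"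

lemma econv_epi:
  assumes "econvex g" "g y1 \<le> ereal r1" "g y2 \<le> ereal r2" "0 \<le> u" "u \<le> 1"
  shows "g ((1 - u) *\<^sub>R y1 + u *\<^sub>R y2) \<le> ereal ((1 - u) * r1 + u * r2)"
proof -
  have "g ((1 - u) *\<^sub>R y1 + u *\<^sub>R y2) \<le> ereal (1 - u) * g y1 + ereal u * g y2"
    using assms unfolding econvex_def by blast
  also have "\<dots> \<le> ereal (1 - u) * ereal r1 + ereal u * ereal r2"
    by (intro add_mono ereal_mult_left_mono) (use assms in auto)
  also have "\<dots> = ereal ((1 - u) * r1 + u * r2)" by simp
  finally show ?thesis .
qed

lemma epiconv_scale:
  assumes "econvex F" "e > 0"
  shows "epiconv (\<lambda>z. ereal e * F z)"
  unfolding epiconv_def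
proof (intro allI impI)
  fix y1 y2 r1 r2 and u :: real
  assume h: "ereal e * F y1 \<le> ereal r1" "ereal e * F y2 \<le> ereal r2" "0 \<le> u" "u \<le> 1"
  have le: "F y \<le> ereal (r / e) \<longleftrightarrow> ereal e * F y \<le> ereal r" for y r
    using ereal_le_divide_pos[of "ereal e" "F y" "ereal r"] assms(2) by simp
  have "F ((1 - u) *\<^sub>R y1 + u *\<^sub>R y2) \<le> ereal ((1 - u) * (r1 / e) + u * (r2 / e))"
    using h le by (intro econv_epi[OF assms(1)]) auto
  also have "(1 - u) * (r1 / e) + u * (r2 / e) = ((1 - u) * r1 + u * r2) / e"
    using assms(2) by (simp add: field_simps)
  finally show "ereal e * F ((1 - u) *\<^sub>R y1 + u *\<^sub>R y2) \<le> ereal ((1 - u) * r1 + u * r2)"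
    using le by blast
qed

lemma epiconv_econvex: "econvex F \<Longrightarrow> epiconv F"
  unfolding epiconv_def using econv_epi by blast

lemma elsc_scale:
  assumes "elsc \<tau> F" "e > 0"
  shows "elsc \<tau> (\<lambda>z. ereal e * F z)"
  unfolding elsc_def
proof
  fix c
  have "{x \<in> topspace \<tau>. ereal e * F x \<le> c} = {x \<in> topspace \<tau>. F x \<le> c / ereal e}"
    using ereal_le_divide_pos[of "ereal e" _ c] assms(2) by auto
  then show "closedin \<tau> {x \<in> topspace \<tau>. ereal e * F x \<le> c}" using assms(1) unfolding elsc_def by simp
qed

lemma epi_closed:
  assumes "elsc \<tau> g" "topspace \<tau> = UNIV"
  shows "closedin (prod_topology \<tau> euclideanreal) {p. g (fst p) \<le> ereal (snd p)}"
  unfolding closedin_def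
proof
  show "{p. g (fst p) \<le> ereal (snd p)} \<subseteq> topspace (prod_topology \<tau> euclideanreal)" using assms(2) by simp
  show "openin (prod_topology \<tau> euclideanreal) (topspace (prod_topology \<tau> euclideanreal) - {p. g (fst p) \<le> ereal (snd p)})"
    unfolding openin_prod_topology_alt
  proof (intro allI impI)
    fix y r assume yr: "(y, r) \<in> topspace (prod_topology \<tau> euclideanreal) - {p. g (fst p) \<le> ereal (snd p)}"
    then have "ereal r < g y" by auto
    then obtain c where c: "ereal r < ereal c" "ereal c < g y" using ereal_dense2 by blast
    define U where "U = topspace \<tau> - {x \<in> topspace \<tau>. g x \<le> ereal c}"
    have "openin \<tau> U" unfolding U_def using assms(1) unfolding elsc_def by blast
    moreover have "openin euclideanreal {s. s < c}" by (simp add: open_Collect_less)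
    moreover have "y \<in> U" using c assms(2) by (auto simp: U_def)
    moreover have "r \<in> {s. s < c}" using c by simp
    moreover have "U \<times> {s. s < c} \<subseteq> topspace (prod_topology \<tau> euclideanreal) - {p. g (fst p) \<le> ereal (snd p)}"
    proof
      fix p assume "p \<in> U \<times> {s. s < c}"
      then have "ereal c < g (fst p)" "snd p < c" by (auto simp: U_def)
      then have "ereal (snd p) < g (fst p)" by (meson ereal_less_eq(3) le_less_trans less_imp_le not_le)
      then show "p \<in> topspace (prod_topology \<tau> euclideanreal) - {p. g (fst p) \<le> ereal (snd p)}"
        using assms(2) by auto
    qed
    ultimately show "\<exists>U V. openin \<tau> U \<and> openin euclideanreal V \<and> y \<in> U \<and> r \<in> V \<and>
        U \<times> V \<subseteq> topspace (prod_topology \<tau> euclideanreal) - {p. g (fst p) \<le> ereal (snd p)}"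
      by blast
  qed
qed




lemma epi_sep:
  fixes \<tau> :: "'a::real_vector topology" and g :: "'a \<Rightarrow> ereal"
  assumes tvs: "tvs \<tau>" and gc: "epiconv g" and gx: "g x = ereal a" and dpos: "\<delta> > 0"
    and V: "openin (prod_topology \<tau> euclideanreal) V" "convex V" "0 \<in> V"
    and dj: "\<And>v y r s. v \<in> V \<Longrightarrow> g y \<le> ereal r \<Longrightarrow> s \<ge> 0 \<Longrightarrow> (x, a - \<delta>) + v \<noteq> (y - s *\<^sub>R w, r - N * s)"
  shows "\<exists>c \<in> dsubdiff \<tau> \<delta> g x. c w \<ge> N"
proof -
  define K where "K = {(y - s *\<^sub>R w, r - N * s) | y r s. g y \<le> ereal r \<and> s \<ge> 0}"
  have cK: "convex K" unfolding convex_def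
  proof (intro ballI allI impI)
    fix p q and u v :: real assume pq: "p \<in> K" "q \<in> K" and uv: "0 \<le> u" "0 \<le> v" "u + v = 1"
    obtain y1 r1 s1 where 1: "p = (y1 - s1 *\<^sub>R w, r1 - N * s1)" "g y1 \<le> ereal r1" "s1 \<ge> 0"
      using pq(1) unfolding K_def by blast
    obtain y2 r2 s2 where 2: "q = (y2 - s2 *\<^sub>R w, r2 - N * s2)" "g y2 \<le> ereal r2" "s2 \<ge> 0"
      using pq(2) unfolding K_def by blast
    have u1: "u = 1 - v" using uv by simp
    have "g ((1 - v) *\<^sub>R y1 + v *\<^sub>R y2) \<le> ereal ((1 - v) * r1 + v * r2)"
      using gc 1(2) 2(2) uv unfolding epiconv_def by auto
    moreover have "u *\<^sub>R p + v *\<^sub>R q = (((1 - v) *\<^sub>R y1 + v *\<^sub>R y2) - ((1 - v) * s1 + v * s2) *\<^sub>R w,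
        ((1 - v) * r1 + v * r2) - N * ((1 - v) * s1 + v * s2))"
      unfolding 1(1) 2(1) u1 by (simp add: algebra_simps)
    moreover have "(1 - v) * s1 + v * s2 \<ge> 0" using 1(3) 2(3) uv by simp
    ultimately have "\<exists>y r s. u *\<^sub>R p + v *\<^sub>R q = (y - s *\<^sub>R w, r - N * s) \<and> g y \<le> ereal r \<and> s \<ge> 0"
      by blast
    then show "u *\<^sub>R p + v *\<^sub>R q \<in> K" unfolding K_def by simp
  qed
  have disj: "\<forall>k\<in>K. \<forall>v\<in>V. (x, a - \<delta>) + v \<noteq> k"
  proof (intro ballI)
    fix k v assume "k \<in> K" "v \<in> V"
    then obtain y r s where "k = (y - s *\<^sub>R w, r - N * s)" "g y \<le> ereal r" "s \<ge> 0"
      unfolding K_def by blast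
    then show "(x, a - \<delta>) + v \<noteq> k" using dj[OF \<open>v \<in> V\<close>] by blast
  qed
  obtain \<Lambda> \<alpha> where L: "linear \<Lambda>" "continuous_map (prod_topology \<tau> euclideanreal) euclideanreal \<Lambda>"
    "\<And>k. k \<in> K \<Longrightarrow> \<Lambda> k \<le> \<alpha>" "\<alpha> < \<Lambda> (x, a - \<delta>)"
    using separation[OF tvs_prod[OF tvs] cK V disj] by blast
  define \<psi> where "\<psi> y = \<Lambda> (y, 0)" for y
  define \<beta> where "\<beta> = \<Lambda> (0, 1)"
  have Lsplit: "\<Lambda> (y, r) = \<psi> y + r * \<beta>" for y r
  proof -
    have "(y, r) = (y, 0) + r *\<^sub>R (0, 1)" by simp
    then have "\<Lambda> (y, r) = \<Lambda> ((y, 0) + r *\<^sub>R (0, 1))" by simp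
    also have "\<dots> = \<Lambda> (y, 0) + r * \<Lambda> (0, 1)"
      using linear_add[OF L(1), of "(y,0)" "r *\<^sub>R (0,1)"] linear_scale[OF L(1), of r "(0,1)"] by simp
    finally show ?thesis unfolding \<psi>_def \<beta>_def .
  qed
  have psilin: "linear \<psi>"
  proof (rule linearI)
    fix y z show "\<psi> (y + z) = \<psi> y + \<psi> z" unfolding \<psi>_def using linear_add[OF L(1), of "(y,0)" "(z,0)"] by simp
  next
    fix c y show "\<psi> (c *\<^sub>R y) = c *\<^sub>R \<psi> y" unfolding \<psi>_def using linear_scale[OF L(1), of c "(y,0)"] by simp
  qed
  have psicont: "continuous_map \<tau> euclideanreal \<psi>"
  proof -
    have "continuous_map \<tau> (prod_topology \<tau> euclideanreal) (\<lambda>y. (y, 0))"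
      by (intro continuous_map_pairedI continuous_map_canonical_const) (simp add: continuous_map_id[unfolded id_def])
    from continuous_map_compose[OF this L(2)] show ?thesis unfolding \<psi>_def by (simp add: o_def)
  qed
  have xK: "(x, a) \<in> K" unfolding K_def using gx by (intro CollectI exI[of _ x] exI[of _ a] exI[of _ 0]) simp
  have "\<psi> x + a * \<beta> < \<psi> x + (a - \<delta>) * \<beta>" using L(3)[OF xK] L(4) Lsplit by simp
  then have "\<delta> * \<beta> < 0" by (simp add: algebra_simps)
  then have bneg: "\<beta> < 0" using dpos by (simp add: mult_less_0_iff)
  define b where "b = - \<beta>"
  have bpos: "b > 0" using bneg b_def by simp
  define c where "c y = \<psi> y / b" for y
  have clin: "linear c" unfolding c_def
    by (rule linearI) (simp_all add: linear_add[OF psilin] linear_scale[OF psilin] add_divide_distrib)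
  have ccont: "continuous_map \<tau> euclideanreal c" unfolding c_def divide_inverse
    by (rule continuous_map_real_mult_right[OF psicont])
  have main: "\<psi> y - r * b \<le> \<alpha>" if "g y \<le> ereal r" for y r
  proof -
    have "(y, r) \<in> K" unfolding K_def using that by (intro CollectI exI[of _ y] exI[of _ r] exI[of _ 0]) simp
    from L(3)[OF this] show ?thesis using Lsplit b_def by simp
  qed
  have alt: "\<alpha> < \<psi> x - (a - \<delta>) * b" using L(4) Lsplit b_def by simp
  have sub: "g y \<ge> g x + ereal (c (y - x) - \<delta>)" for y
  proof (cases "g y")
    case (real r)
    have "\<psi> y - r * b < \<psi> x - (a - \<delta>) * b" using main[of y r] alt real by simp
    then have "(\<psi> y - \<psi> x) < (r - a + \<delta>) * b" by (simp add: algebra_simps)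
    then have "(\<psi> y - \<psi> x) / b < r - a + \<delta>" using bpos by (simp add: divide_less_eq)
    moreover have "c (y - x) = (\<psi> y - \<psi> x) / b" unfolding c_def using linear_diff[OF psilin] by simp
    ultimately show ?thesis using real gx by simp
  next
    case PInf then show ?thesis by simp
  next
    case MInf
    define r where "r = (\<psi> y - \<alpha>) / b - 1"
    have "\<psi> y - r * b \<le> \<alpha>" using main[of y r] MInf by simp
    moreover have "\<psi> y - r * b = \<alpha> + b" unfolding r_def using bpos by (simp add: field_simps)
    ultimately show ?thesis using bpos by simp
  qed
  have cw: "N \<le> c w"
  proof (rule ccontr)
    assume "\<not> N \<le> c w"
    then have d: "N * b - \<psi> w > 0" unfolding c_def using bpos by (simp add: field_simps)
    define M where "M = \<alpha> - \<psi> x + a * b"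
    define s where "s = (\<bar>M\<bar> + 1) / (N * b - \<psi> w)"
    have s0: "s \<ge> 0" unfolding s_def using d by simp
    have "(x - s *\<^sub>R w, a - N * s) \<in> K" unfolding K_def using gx s0
      by (intro CollectI exI[of _ x] exI[of _ a] exI[of _ s]) simp
    from L(3)[OF this] have "\<psi> x - s * \<psi> w - (a - N * s) * b \<le> \<alpha>"
      using Lsplit b_def linear_diff[OF psilin] linear_scale[OF psilin] by simp
    then have "s * (N * b - \<psi> w) \<le> M" unfolding M_def by (simp add: algebra_simps)
    moreover have "s * (N * b - \<psi> w) = \<bar>M\<bar> + 1" unfolding s_def using d by simp
    ultimately show False by simp
  qed
  have "c \<in> dsubdiff \<tau> \<delta> g x"
    unfolding dsubdiff_def dual_def using gx clin ccont sub by auto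
  then show ?thesis using cw by blast
qed




lemma dsub_nonempty:
  fixes \<tau> :: "'a::real_vector topology" and g :: "'a \<Rightarrow> ereal"
  assumes tvs: "tvs \<tau>" and gc: "epiconv g" and gl: "elsc \<tau> g" and gx: "g x = ereal a" and dpos: "\<delta> > 0"
  shows "dsubdiff \<tau> \<delta> g x \<noteq> {}"
proof -
  let ?P = "prod_topology \<tau> euclideanreal"
  define E where "E = {p. g (fst p) \<le> ereal (snd p)}"
  have cE: "closedin ?P E" unfolding E_def by (rule epi_closed[OF gl tvs_top[OF tvs]])
  have cS: "compactin ?P {(x, a - \<delta>)}" using tvs_top[OF tvs] by simp
  have dj: "{(x, a - \<delta>)} \<inter> E = {}" using gx dpos by (simp add: E_def)
  obtain V where V: "openin ?P V" "convex V" "0 \<in> V" "\<forall>s\<in>{(x, a - \<delta>)}. \<forall>v\<in>V. s + v \<notin> E"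
    using tube[OF tvs_prod[OF tvs] cS cE dj] by blast
  have "\<exists>c \<in> dsubdiff \<tau> \<delta> g x. c 0 \<ge> 0"
  proof (rule epi_sep[OF tvs gc gx dpos V(1-3)])
    fix v y r and s :: real assume h: "v \<in> V" "g y \<le> ereal r" "s \<ge> 0"
    show "(x, a - \<delta>) + v \<noteq> (y - s *\<^sub>R 0, r - 0 * s)"
    proof
      assume "(x, a - \<delta>) + v = (y - s *\<^sub>R 0, r - 0 * s)"
      then have "(x, a - \<delta>) + v \<in> E" using h(2) by (simp add: E_def)
      then show False using V(4) h(1) by blast
    qed
  qed
  then show ?thesis by blast
qed

lemma dsub_unbounded:
  fixes \<tau> :: "'a::real_vector topology" and g :: "'a \<Rightarrow> ereal"
  assumes tvs: "tvs \<tau>" and gc: "epiconv g" and gl: "elsc \<tau> g" and gx: "g x = ereal a" and dpos: "\<delta> > 0"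
    and inf: "\<And>s. s > 0 \<Longrightarrow> g (x + s *\<^sub>R w) = \<infinity>"
  shows "\<exists>c \<in> dsubdiff \<tau> \<delta> g x. c w \<ge> N"
proof -
  let ?P = "prod_topology \<tau> euclideanreal"
  define E where "E = {p. g (fst p) \<le> ereal (snd p)}"
  have cE: "closedin ?P E" unfolding E_def by (rule epi_closed[OF gl tvs_top[OF tvs]])
  define \<gamma> where "\<gamma> s = (x + s *\<^sub>R w, a - \<delta> + N * s)" for s :: real
  define \<Sigma> where "\<Sigma> = \<gamma> ` {0..1} \<union> {(x + w, a + N)}"
  have cg: "continuous_map euclideanreal ?P \<gamma>"
  proof -
    have c1: "continuous_map euclideanreal \<tau> (\<lambda>s. s *\<^sub>R w + x)"
      using continuous_map_compose[OF tvs_ray_cont[OF tvs, of w] tvs_transl_cont[OF tvs, of x]] by (simp add: o_def)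
    have c2: "continuous_map euclideanreal euclideanreal (\<lambda>s::real. a - \<delta> + N * s)"
      by (simp add: continuous_intros)
    show ?thesis unfolding \<gamma>_def using continuous_map_pairedI[OF c1 c2] by (simp add: add.commute)
  qed
  have cS: "compactin ?P \<Sigma>" unfolding \<Sigma>_def
    by (intro compactin_Un image_compactin[OF _ cg]) (auto simp: tvs_top[OF tvs])
  have dj: "\<Sigma> \<inter> E = {}"
  proof -
    have "\<gamma> s \<notin> E" if "s \<in> {0..1}" for s
    proof (cases "s = 0")
      case True then show ?thesis using gx dpos by (simp add: \<gamma>_def E_def)
    next
      case False then have "s > 0" using that by simp
      then show ?thesis using inf by (simp add: \<gamma>_def E_def)
    qed
    moreover have "(x + w, a + N) \<notin> E" using inf[of 1] by (simp add: E_def)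
    ultimately show ?thesis unfolding \<Sigma>_def by blast
  qed
  obtain V where V: "openin ?P V" "convex V" "0 \<in> V" "\<forall>s\<in>\<Sigma>. \<forall>v\<in>V. s + v \<notin> E"
    using tube[OF tvs_prod[OF tvs] cS cE dj] by blast
  show ?thesis
  proof (rule epi_sep[OF tvs gc gx dpos V(1-3)])
    fix v y r and s :: real assume h: "v \<in> V" "g y \<le> ereal r" "s \<ge> 0"
    show "(x, a - \<delta>) + v \<noteq> (y - s *\<^sub>R w, r - N * s)"
    proof
      assume eq: "(x, a - \<delta>) + v = (y - s *\<^sub>R w, r - N * s)"
      obtain v1 v2 where v: "v = (v1, v2)" by (cases v)
      have y: "y = x + s *\<^sub>R w + v1" and r: "r = a - \<delta> + N * s + v2" using eq v by (auto simp: algebra_simps)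
      show False
      proof (cases "s \<le> 1")
        case True
        then have "\<gamma> s \<in> \<Sigma>" unfolding \<Sigma>_def using h(3) by auto
        moreover have "\<gamma> s + v \<in> E" using h(2) unfolding E_def \<gamma>_def v y r by (simp add: algebra_simps)
        ultimately show False using V(4) h(1) by blast
      next
        case False
        define u where "u = 1 / s"
        have u: "0 \<le> u" "u \<le> 1" "u * s = 1" using False by (auto simp: u_def)
        have "g ((1 - u) *\<^sub>R x + u *\<^sub>R y) \<le> ereal ((1 - u) * a + u * r)"
          using gc gx h(2) u(1,2) unfolding epiconv_def by auto
        moreover have "(1 - u) *\<^sub>R x + u *\<^sub>R y = x + w + u *\<^sub>R v1"
        proof -
          have "(1 - u) *\<^sub>R x + u *\<^sub>R y = x + (u * s) *\<^sub>R w + u *\<^sub>R v1"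
            unfolding y by (simp add: algebra_simps)
          then show ?thesis using u(3) by simp
        qed
        moreover have "(1 - u) * a + u * r \<le> a + N + u * v2"
        proof -
          have "(1 - u) * a + u * r = a - u * \<delta> + (u * s) * N + u * v2" unfolding r by (simp add: algebra_simps)
          then show ?thesis using u dpos by simp
        qed
        ultimately have "g (x + w + u *\<^sub>R v1) \<le> ereal (a + N + u * v2)" by (metis order_trans ereal_less_eq(3))
        then have "(x + w, a + N) + u *\<^sub>R v \<in> E" unfolding E_def v by (simp add: algebra_simps)
        moreover have "u *\<^sub>R v \<in> V" using convex_star0[OF V(2) V(3) h(1) u(1,2)] .
        moreover have "(x + w, a + N) \<in> \<Sigma>" unfolding \<Sigma>_def by simp
        ultimately show False using V(4) by blast
      qed
    qed
  qed
qed




lemma dual_fconvex: "fconvex (dual \<tau>)"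
  unfolding fconvex_def dual_def
proof (intro ballI allI impI CollectI conjI)
  fix \<phi> \<psi> :: "'a \<Rightarrow> real" and u :: real
  assume "\<phi> \<in> {\<phi>. linear \<phi> \<and> continuous_map \<tau> euclideanreal \<phi>}" "\<psi> \<in> {\<phi>. linear \<phi> \<and> continuous_map \<tau> euclideanreal \<phi>}"
  then have h: "linear \<phi>" "linear \<psi>" "continuous_map \<tau> euclideanreal \<phi>" "continuous_map \<tau> euclideanreal \<psi>" by auto
  show "linear (\<lambda>x. (1 - u) * \<phi> x + u * \<psi> x)"
    by (rule linearI) (simp_all add: linear_add[OF h(1)] linear_add[OF h(2)] linear_scale[OF h(1)] linear_scale[OF h(2)] algebra_simps)
  show "continuous_map \<tau> euclideanreal (\<lambda>x. (1 - u) * \<phi> x + u * \<psi> x)"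
    by (intro continuous_map_add continuous_map_real_mult_left h(3,4))
qed

lemma hull_sub: "A \<subseteq> C \<Longrightarrow> fconvex C \<Longrightarrow> fconv_hull A \<subseteq> C"
  unfolding fconv_hull_def by blast

lemma hull_sup: "A \<subseteq> fconv_hull A"
  unfolding fconv_hull_def by blast

lemma hull_fconvex: "fconvex (fconv_hull A)"
  unfolding fconv_hull_def fconvex_def by blast

lemma fconvex_convex: assumes "fconvex C" shows "convex C"
  unfolding convex_def
proof (intro ballI allI impI)
  fix p q and u v :: real assume h: "p \<in> C" "q \<in> C" "0 \<le> u" "0 \<le> v" "u + v = 1"
  have "(\<lambda>x. (1 - v) * p x + v * q x) \<in> C" using assms h unfolding fconvex_def by auto
  moreover have "u *\<^sub>R p + v *\<^sub>R q = (\<lambda>x. (1 - v) * p x + v * q x)" using h(5) by (auto simp: fun_eq_iff)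
  ultimately show "u *\<^sub>R p + v *\<^sub>R q \<in> C" by simp
qed

lemma wstar_clco_eq:
  assumes "A \<subseteq> dual \<tau>"
  shows "wstar_clco \<tau> A = dual \<tau> \<inter> (euclidean closure_of (fconv_hull A))"
proof -
  have "fconv_hull A \<subseteq> dual \<tau>" using hull_sub[OF assms dual_fconvex] .
  then show ?thesis unfolding wstar_clco_def wstar_def closure_of_subtopology by (simp add: Int_absorb1)
qed


theorem corollary4:
  fixes \<tau> :: "'a::real_vector topology"
    and S :: "'i topology"
    and F :: "'i \<Rightarrow> 'a \<Rightarrow> ereal"
    and eps \<delta> :: "'i \<Rightarrow> real"
    and x :: 'a
  assumes X: "lcs \<tau>"
    and T_ne: "topspace S \<noteq> {}"
    and SH_cpt: "compact_space S" and SH_haus: "Hausdorff_space S"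
    and SH_usc: "\<And>z. eusc_on S (\<lambda>t. F t z)"
    and Fconv: "\<And>t. t \<in> topspace S \<Longrightarrow> econvex (F t)"
    and Fprop: "\<And>t. t \<in> topspace S \<Longrightarrow> eproper (F t)"
    and Flsc: "\<And>t. t \<in> topspace S \<Longrightarrow> elsc \<tau> (F t)"
    and xdom: "x \<in> edom (\<lambda>z. SUP t\<in>topspace S. F t z)"
    and eps: "\<And>t. t \<in> topspace S \<Longrightarrow> 0 < eps t \<and> eps t \<le> 1"
    and eps_inf: "(INF t\<in>topspace S. ereal (eps t) * F t x) > -\<infinity>"
    and dpos: "\<And>t. t \<in> topspace S \<Longrightarrow> \<delta> t > 0"
    and dinf: "(INF t\<in>topspace S. ereal (\<delta> t)) > 0"
    and dsup: "(SUP t\<in>topspace S. ereal (\<delta> t)) < \<infinity>"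
  shows "normal_cone \<tau> (edom (\<lambda>z. SUP t\<in>topspace S. F t z)) x
         = rec_cone (wstar_clco \<tau> (\<Union>t\<in>topspace S. dsubdiff \<tau> (\<delta> t) (\<lambda>z. ereal (eps t) * F t z) x))"
proof -
  define T where "T = topspace S"
  define f where "f z = (SUP t\<in>T. F t z)" for z
  define g where "g t z = ereal (eps t) * F t z" for t z
  define A where "A = (\<Union>t\<in>T. dsubdiff \<tau> (\<delta> t) (g t) x)"
  define H where "H = fconv_hull A"
  define C where "C = wstar_clco \<tau> A"
  have tvs: "tvs \<tau>" using X by (rule lcs_tvs)
  obtain t0 where t0: "t0 \<in> T" using T_ne T_def by blast
  have nm: "F t z \<noteq> -\<infinity>" if "t \<in> T" for t z using Fprop[of t] that unfolding eproper_def T_def by blast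
  have Fle: "F t z \<le> f z" if "t \<in> T" for t z unfolding f_def using that by (rule SUP_upper)
  have "f x < \<infinity>" using xdom unfolding edom_def f_def T_def by simp
  moreover have "f x \<noteq> -\<infinity>" using Fle[OF t0, of x] nm[OF t0, of x] by auto
  ultimately obtain fxv where fxv: "f x = ereal fxv" by (cases "f x") auto
  define ax where "ax t = real_of_ereal (F t x)" for t
  have Fx: "F t x = ereal (ax t)" if "t \<in> T" for t
  proof -
    have "F t x \<noteq> \<infinity>" using Fle[OF that, of x] fxv by auto
    then show ?thesis using nm[OF that, of x] unfolding ax_def by (cases "F t x") auto
  qed
  have epst: "0 < eps t" "eps t \<le> 1" if "t \<in> T" for t using eps that T_def by auto
  have gx: "g t x = ereal (eps t * ax t)" if "t \<in> T" for t using Fx[OF that] by (simp add: g_def)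
  have dp: "\<delta> t > 0" if "t \<in> T" for t using dpos that T_def by blast
  have gconv: "epiconv (g t)" if tT: "t \<in> T" for t
  proof -
    have "econvex (F t)" using Fconv tT T_def by blast
    then show ?thesis unfolding g_def by (rule epiconv_scale[OF _ epst(1)[OF tT]])
  qed
  have glsc: "elsc \<tau> (g t)" if tT: "t \<in> T" for t
  proof -
    have "elsc \<tau> (F t)" using Flsc tT T_def by blast
    then show ?thesis unfolding g_def by (rule elsc_scale[OF _ epst(1)[OF tT]])
  qed
  have Adual: "A \<subseteq> dual \<tau>" unfolding A_def dsubdiff_def by auto
  have Hdual: "H \<subseteq> dual \<tau>" unfolding H_def using hull_sub[OF Adual dual_fconvex] .
  have Ceq: "C = dual \<tau> \<inter> (euclidean closure_of H)" unfolding C_def H_def by (rule wstar_clco_eq[OF Adual])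
  have AH: "A \<subseteq> H" unfolding H_def by (rule hull_sup)
  have HC: "H \<subseteq> C" unfolding Ceq using Hdual closure_of_subset[of H euclidean] by auto
  have goal_eq: "normal_cone \<tau> (edom f) x = rec_cone C"
  proof
    show "rec_cone C \<subseteq> normal_cone \<tau> (edom f) x"
    proof
      fix d assume d: "d \<in> rec_cone C"
      obtain c0 where c0: "c0 \<in> dsubdiff \<tau> (\<delta> t0) (g t0) x"
        using dsub_nonempty[OF tvs gconv[OF t0] glsc[OF t0] gx[OF t0] dp[OF t0]] by blast
      have c0C: "c0 \<in> C" using c0 t0 AH HC unfolding A_def by blast
      have dR: "\<forall>c\<in>C. \<forall>l\<ge>0. (\<lambda>z. c z + l * d z) \<in> C" using d unfolding rec_cone_def by simp
      have "(\<lambda>z. c0 z + 1 * d z) \<in> C" using dR[rule_format, OF c0C, of 1] by simp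
      then have a1: "(\<lambda>z. c0 z + d z) \<in> dual \<tau>" unfolding Ceq by simp
      have a2: "c0 \<in> dual \<tau>" using c0C Ceq by blast
      have l1: "linear (\<lambda>z. c0 z + d z)" "continuous_map \<tau> euclideanreal (\<lambda>z. c0 z + d z)"
        using a1 unfolding dual_def by auto
      have l2: "linear c0" "continuous_map \<tau> euclideanreal c0" using a2 unfolding dual_def by auto
      have "linear (\<lambda>z. (c0 z + d z) - c0 z)"
      proof (rule linearI)
        fix u v show "c0 (u + v) + d (u + v) - c0 (u + v) = c0 u + d u - c0 u + (c0 v + d v - c0 v)"
          using linear_add[OF l1(1), of u v] linear_add[OF l2(1), of u v] by simp
      next
        fix r u
        have "c0 (r *\<^sub>R u) + d (r *\<^sub>R u) = r * (c0 u + d u)"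
          using linear_scale[OF l1(1), of r u] by simp
        moreover have "c0 (r *\<^sub>R u) = r * c0 u" using linear_scale[OF l2(1), of r u] by simp
        ultimately show "c0 (r *\<^sub>R u) + d (r *\<^sub>R u) - c0 (r *\<^sub>R u) = r *\<^sub>R (c0 u + d u - c0 u)"
          by (simp add: algebra_simps)
      qed
      moreover have "continuous_map \<tau> euclideanreal (\<lambda>z. (c0 z + d z) - c0 z)"
        by (rule continuous_map_diff[OF l1(2) l2(2)])
      ultimately have ddual: "d \<in> dual \<tau>" unfolding dual_def by simp
      have "(INF t\<in>T. g t x) \<le> g t0 x" using t0 by (rule INF_lower)
      then have "(INF t\<in>T. g t x) \<noteq> \<infinity>" using gx[OF t0] by auto
      moreover have "(INF t\<in>T. g t x) \<noteq> -\<infinity>" using eps_inf unfolding T_def g_def by auto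
      ultimately obtain m0 where m0: "(INF t\<in>T. g t x) = ereal m0" by (cases "(INF t\<in>T. g t x)") auto
      have m0le: "m0 \<le> eps t * ax t" if "t \<in> T" for t
        using INF_lower[OF that, of "\<lambda>t. g t x"] m0 gx[OF that] by simp
      have "ereal (\<delta> t0) \<le> (SUP t\<in>T. ereal (\<delta> t))" using t0 by (rule SUP_upper)
      then have "(SUP t\<in>T. ereal (\<delta> t)) \<noteq> -\<infinity>" by auto
      moreover have "(SUP t\<in>T. ereal (\<delta> t)) \<noteq> \<infinity>" using dsup unfolding T_def by auto
      ultimately obtain D0 where D0: "(SUP t\<in>T. ereal (\<delta> t)) = ereal D0" by (cases "(SUP t\<in>T. ereal (\<delta> t))") auto
      have D0le: "\<delta> t \<le> D0" if "t \<in> T" for t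
        using SUP_upper[OF that, of "\<lambda>t. ereal (\<delta> t)"] D0 by simp
      show "d \<in> normal_cone \<tau> (edom f) x" unfolding normal_cone_def
      proof (intro CollectI conjI ddual ballI)
        fix y assume y: "y \<in> edom f"
        have "f y < \<infinity>" using y unfolding edom_def by simp
        moreover have "f y \<noteq> -\<infinity>" using Fle[OF t0, of y] nm[OF t0, of y] by auto
        ultimately obtain fy where fy: "f y = ereal fy" by (cases "f y") auto
        define M where "M = max 0 fy - m0 + D0"
        have bound: "c' (y - x) \<le> M" if cA: "c' \<in> A" for c'
        proof -
          obtain t where t: "t \<in> T" "c' \<in> dsubdiff \<tau> (\<delta> t) (g t) x" using cA unfolding A_def by blast
          have sub: "g t y \<ge> g t x + ereal (c' (y - x) - \<delta> t)"
            using t(2) unfolding dsubdiff_def by (auto split: if_splits)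
          have "F t y \<noteq> \<infinity>" using Fle[OF t(1), of y] fy by auto
          then obtain yb where yb: "F t y = ereal yb" using nm[OF t(1), of y] by (cases "F t y") auto
          have byle: "yb \<le> fy" using Fle[OF t(1), of y] yb fy by simp
          have "eps t * yb \<ge> eps t * ax t + (c' (y - x) - \<delta> t)"
            using sub yb gx[OF t(1)] by (simp add: g_def)
          moreover have "eps t * yb \<le> max 0 fy"
          proof (cases "yb \<ge> 0")
            case True
            then have "eps t * yb \<le> 1 * yb" using epst[OF t(1)] by (intro mult_right_mono) auto
            then show ?thesis using byle by simp
          next
            case False
            then have "eps t * yb < 0" using epst[OF t(1)] by (simp add: mult_pos_neg)
            then show ?thesis by simp
          qed
          ultimately show ?thesis unfolding M_def using m0le[OF t(1)] D0le[OF t(1)] by linarith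
        qed
        define B where "B = {\<psi>::'a \<Rightarrow> real. \<psi> (y - x) \<le> M}"
        have "fconvex B" unfolding fconvex_def B_def
        proof (intro ballI allI impI CollectI)
          fix p q and u :: real assume "p \<in> {\<psi>. \<psi> (y - x) \<le> M}" "q \<in> {\<psi>. \<psi> (y - x) \<le> M}" "0 \<le> u \<and> u \<le> 1"
          then have "(1 - u) * p (y - x) \<le> (1 - u) * M" "u * q (y - x) \<le> u * M"
            by (auto intro: mult_left_mono)
          then show "(1 - u) * p (y - x) + u * q (y - x) \<le> M" by (simp add: algebra_simps)
        qed
        then have HB: "H \<subseteq> B" unfolding H_def using bound B_def by (intro hull_sub) auto
        have "closedin euclidean B"
        proof -
          have "closedin euclidean {\<psi> \<in> topspace euclidean. (\<lambda>\<psi>::'a \<Rightarrow> real. \<psi> (y - x)) \<psi> \<in> {..M}}"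
            by (rule closedin_continuous_map_preimage[OF proj_cont]) simp
          then show ?thesis unfolding B_def by simp
        qed
        then have CB: "C \<subseteq> B" unfolding Ceq using closure_of_minimal[OF HB] by blast
        have lin: "\<forall>l\<ge>0. c0 (y - x) + l * d (y - x) \<le> M"
        proof (intro allI impI)
          fix l :: real assume "l \<ge> 0"
          have "(\<lambda>z. c0 z + l * d z) \<in> C" using dR[rule_format, OF c0C \<open>l \<ge> 0\<close>] .
          then show "c0 (y - x) + l * d (y - x) \<le> M" using CB unfolding B_def by blast
        qed
        show "d (y - x) \<le> 0"
        proof (rule ccontr)
          assume "\<not> d (y - x) \<le> 0"
          then have dp: "d (y - x) > 0" by simp
          define l where "l = (\<bar>M\<bar> + \<bar>c0 (y - x)\<bar> + 1) / d (y - x)"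
          have "l \<ge> 0" unfolding l_def using dp by simp
          then have "c0 (y - x) + l * d (y - x) \<le> M" using lin by blast
          moreover have "l * d (y - x) = \<bar>M\<bar> + \<bar>c0 (y - x)\<bar> + 1" unfolding l_def using dp by simp
          ultimately show False by linarith
        qed
      qed
    qed
  next
    show "normal_cone \<tau> (edom f) x \<subseteq> rec_cone C"
    proof
      fix \<phi> assume phi: "\<phi> \<in> normal_cone \<tau> (edom f) x"
      then have phidual: "\<phi> \<in> dual \<tau>" and phin: "\<And>y. y \<in> edom f \<Longrightarrow> \<phi> (y - x) \<le> 0"
        unfolding normal_cone_def by auto
      show "\<phi> \<in> rec_cone C" unfolding rec_cone_def
      proof (intro CollectI ballI allI impI)
        fix c and l :: real assume cC: "c \<in> C" and l: "l \<ge> 0"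
        define q where "q = (\<lambda>z. c z + l * \<phi> z)"
        have cdual: "c \<in> dual \<tau>" using cC Ceq by blast
        have qdual: "q \<in> dual \<tau>"
        proof -
          have "linear c" "linear \<phi>" "continuous_map \<tau> euclideanreal c" "continuous_map \<tau> euclideanreal \<phi>"
            using cdual phidual unfolding dual_def by auto
          then show ?thesis unfolding q_def dual_def
            by (auto intro!: linearI continuous_map_add continuous_map_real_mult_left
                simp: linear_add linear_scale algebra_simps)
        qed
        show "(\<lambda>z. c z + l * \<phi> z) \<in> C"
        proof (rule ccontr)
          assume nq: "(\<lambda>z. c z + l * \<phi> z) \<notin> C"
          then have "q \<notin> euclidean closure_of H" using qdual unfolding Ceq q_def by blast
          then obtain Ob where Ob: "q \<in> Ob" "openin euclidean Ob" "\<And>y. y \<in> H \<Longrightarrow> y \<notin> Ob"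
            unfolding in_closure_of by auto
          obtain Z e where Ze: "finite Z" "e > 0" "{g. \<forall>z\<in>Z. \<bar>g z - q z\<bar> < e} \<subseteq> Ob"
            using box_lemma[of Ob q] Ob by auto
          define V where "V = {g::'a \<Rightarrow> real. \<forall>z\<in>Z. \<bar>g z - 0 z\<bar> < e}"
          have V: "openin euclidean V" "convex V" "0 \<in> V"
            unfolding V_def using box_open[OF Ze(1), of 0 e] box_convex[of Z 0 e] Ze(2) by simp_all
          have disj: "\<forall>k\<in>H. \<forall>v\<in>V. q + v \<noteq> k"
          proof (intro ballI)
            fix k v assume "k \<in> H" "v \<in> V"
            then have "q + v \<in> {g. \<forall>z\<in>Z. \<bar>g z - q z\<bar> < e}" unfolding V_def by simp
            then have "q + v \<in> Ob" using Ze(3) by blast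
            then show "q + v \<noteq> k" using Ob(3)[OF \<open>k \<in> H\<close>] by blast
          qed
          have cvH: "convex H" unfolding H_def by (rule fconvex_convex[OF hull_fconvex])
          obtain \<Lambda> \<alpha> where L: "linear \<Lambda>" "continuous_map euclidean euclideanreal \<Lambda>"
            "\<And>k. k \<in> H \<Longrightarrow> \<Lambda> k \<le> \<alpha>" "\<alpha> < \<Lambda> q"
            using separation[OF tvs_fun cvH V disj] by blast
          obtain Z' a where rep: "finite Z'" "\<And>\<psi>. \<Lambda> \<psi> = (\<Sum>z\<in>Z'. a z * \<psi> z)"
            using fun_rep[OF L(1,2)] by blast
          define w where "w = (\<Sum>z\<in>Z'. a z *\<^sub>R z)"
          have Lw: "\<Lambda> \<psi> = \<psi> w" if "\<psi> \<in> dual \<tau>" for \<psi>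
          proof -
            have "linear \<psi>" using that unfolding dual_def by auto
            then show ?thesis unfolding rep(2) w_def by (simp add: linear_sum linear_scale o_def)
          qed
          have "closedin euclidean {\<psi> \<in> topspace euclidean. \<Lambda> \<psi> \<in> {..\<alpha>}}"
            by (rule closedin_continuous_map_preimage[OF L(2)]) simp
          then have "euclidean closure_of H \<subseteq> {\<psi> \<in> topspace euclidean. \<Lambda> \<psi> \<in> {..\<alpha>}}"
            using L(3) by (intro closure_of_minimal) auto
          then have "\<Lambda> c \<le> \<alpha>" using cC Ceq by auto
          moreover have "\<Lambda> q = \<Lambda> c + l * \<Lambda> \<phi>" unfolding rep(2) q_def
            by (simp add: sum.distrib sum_distrib_left algebra_simps)
          ultimately have "l * \<Lambda> \<phi> > 0" using L(4) by simp
          then have phiw: "\<phi> w > 0" using l Lw[OF phidual] by (simp add: zero_less_mult_iff)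
          have ray: "\<exists>s>0. \<exists>n. F t (x + s *\<^sub>R w) < ereal n" if t: "t \<in> T" for t
          proof (rule ccontr)
            assume "\<not> (\<exists>s>0. \<exists>n. F t (x + s *\<^sub>R w) < ereal n)"
            then have nex: "\<And>s n. s > 0 \<Longrightarrow> \<not> F t (x + s *\<^sub>R w) < ereal n" by blast
            have inf: "F t (x + s *\<^sub>R w) = \<infinity>" if "s > 0" for s
            proof (rule ccontr)
              assume "F t (x + s *\<^sub>R w) \<noteq> \<infinity>"
              then have "F t (x + s *\<^sub>R w) < \<infinity>" by (simp add: less_top)
              then obtain n where "F t (x + s *\<^sub>R w) < ereal n" using ereal_dense2 by blast
              then show False using nex[OF that] by blast
            qed
            have ginf: "g t (x + s *\<^sub>R w) = \<infinity>" if "s > 0" for s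
              using inf[OF that] epst(1)[OF t] by (simp add: g_def)
            obtain c' where c': "c' \<in> dsubdiff \<tau> (\<delta> t) (g t) x" "c' w \<ge> \<alpha> + 1"
              using dsub_unbounded[OF tvs gconv[OF t] glsc[OF t] gx[OF t] dp[OF t] ginf, of "\<alpha> + 1"] by blast
            have "c' \<in> H" using c'(1) t AH unfolding A_def by blast
            then have "\<Lambda> c' \<le> \<alpha>" by (rule L(3))
            moreover have "c' \<in> dual \<tau>" using c'(1) Adual t unfolding A_def by blast
            ultimately show False using Lw c'(2) by simp
          qed
          have "\<forall>t\<in>T. \<exists>p::real \<times> real. fst p > 0 \<and> F t (x + fst p *\<^sub>R w) < ereal (snd p)"
          proof
            fix t assume "t \<in> T"
            then obtain s n where "s > 0" "F t (x + s *\<^sub>R w) < ereal n" using ray by blast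
            then show "\<exists>p::real \<times> real. fst p > 0 \<and> F t (x + fst p *\<^sub>R w) < ereal (snd p)"
              by (intro exI[of _ "(s, n)"]) simp
          qed
          from bchoice[OF this] obtain pp where pp: "\<forall>t\<in>T. fst (pp t) > 0 \<and> F t (x + fst (pp t) *\<^sub>R w) < ereal (snd (pp t))"
            by blast
          define st where "st t = fst (pp t)" for t
          define nt where "nt t = snd (pp t)" for t
          have stn: "\<And>t. t \<in> T \<Longrightarrow> st t > 0" "\<And>t. t \<in> T \<Longrightarrow> F t (x + st t *\<^sub>R w) < ereal (nt t)"
            using pp unfolding st_def nt_def by auto
          define Ot where "Ot t = {t' \<in> T. F t' (x + st t *\<^sub>R w) < ereal (nt t)}" for t
          have Oto: "openin S (Ot t)" for t
          proof -
            have "closedin S {t' \<in> topspace S. ereal (nt t) \<le> F t' (x + st t *\<^sub>R w)}"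
              using SH_usc[of "x + st t *\<^sub>R w"] unfolding eusc_on_def by blast
            then have "openin S (topspace S - {t' \<in> topspace S. ereal (nt t) \<le> F t' (x + st t *\<^sub>R w)})"
              by (simp add: closedin_def)
            moreover have "topspace S - {t' \<in> topspace S. ereal (nt t) \<le> F t' (x + st t *\<^sub>R w)} = Ot t"
              unfolding Ot_def T_def by (auto simp: not_le)
            ultimately show ?thesis by simp
          qed
          have cov: "T \<subseteq> \<Union>(Ot ` T)" unfolding Ot_def using stn by auto
          have "compactin S T" using SH_cpt unfolding compact_space_def T_def .
          moreover have "(\<forall>U \<in> Ot ` T. openin S U) \<and> T \<subseteq> \<Union>(Ot ` T) \<longrightarrow> (\<exists>\<F>. finite \<F> \<and> \<F> \<subseteq> Ot ` T \<and> T \<subseteq> \<Union>\<F>)"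
            using calculation unfolding compactin_def by (elim conjE) (rule spec)
          ultimately have "\<exists>\<F>. finite \<F> \<and> \<F> \<subseteq> Ot ` T \<and> T \<subseteq> \<Union>\<F>" using Oto cov by blast
          then obtain \<F> where Fc: "finite \<F>" "\<F> \<subseteq> Ot ` T" "T \<subseteq> \<Union>\<F>" by blast
          obtain T0 where T0: "T0 \<subseteq> T" "finite T0" "\<F> = Ot ` T0"
            using finite_subset_image[OF Fc(1) Fc(2)] by blast
          have T0ne: "T0 \<noteq> {}" using T0 Fc(3) t0 by auto
          define s where "s = Min (st ` T0)"
          define n where "n = Max (nt ` T0)"
          have s0: "s > 0" unfolding s_def using T0 T0ne stn(1) by (subst Min_gr_iff) auto
          have sle: "s \<le> st t" if "t \<in> T0" for t unfolding s_def using T0(2) that by simp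
          have nge: "nt t \<le> n" if "t \<in> T0" for t unfolding n_def using T0(2) that by simp
          have bnd: "F t' (x + s *\<^sub>R w) \<le> ereal (max fxv n)" if t': "t' \<in> T" for t'
          proof -
            obtain t where t: "t \<in> T0" "t' \<in> Ot t" using Fc(3) T0(3) t' by auto
            have tT: "t \<in> T" using t(1) T0(1) by blast
            have "F t' (x + st t *\<^sub>R w) < ereal (nt t)" using t(2) unfolding Ot_def by simp
            moreover have "ereal (nt t) \<le> ereal n" using nge[OF t(1)] by simp
            ultimately have Fst: "F t' (x + st t *\<^sub>R w) \<le> ereal n" by (meson less_imp_le order_trans)
            define u where "u = s / st t"
            have stp: "st t > 0" using stn(1)[OF tT] .
            have u: "0 \<le> u" "u \<le> 1" "u * st t = s" using s0 sle[OF t(1)] stp by (auto simp: u_def field_simps)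
            have "F t' ((1 - u) *\<^sub>R x + u *\<^sub>R (x + st t *\<^sub>R w)) \<le> ereal ((1 - u) * fxv + u * n)"
              using econv_epi[OF Fconv[of t'] _ Fst u(1,2), of x fxv] Fle[OF t', of x] fxv t' T_def by auto
            moreover have "(1 - u) *\<^sub>R x + u *\<^sub>R (x + st t *\<^sub>R w) = x + s *\<^sub>R w"
              using u(3) by (simp add: algebra_simps)
            moreover have "(1 - u) * fxv + u * n \<le> max fxv n"
            proof -
              have "(1 - u) * fxv \<le> (1 - u) * max fxv n" using u by (intro mult_left_mono) auto
              moreover have "u * n \<le> u * max fxv n" using u by (intro mult_left_mono) auto
              ultimately show ?thesis by (simp add: algebra_simps)
            qed
            ultimately show ?thesis by (metis ereal_less_eq(3) order_trans)
          qed
          have "f (x + s *\<^sub>R w) \<le> ereal (max fxv n)" unfolding f_def using bnd by (rule SUP_least)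
          moreover have "ereal (max fxv n) < \<infinity>" by (simp add: max_def)
          ultimately have "f (x + s *\<^sub>R w) < \<infinity>" by (rule le_less_trans)
          then have "x + s *\<^sub>R w \<in> edom f" unfolding edom_def by simp
          then have "\<phi> (x + s *\<^sub>R w - x) \<le> 0" by (rule phin)
          moreover have "\<phi> (x + s *\<^sub>R w - x) = s * \<phi> w"
            using phidual unfolding dual_def by (simp add: linear_scale)
          ultimately show False using s0 phiw by (simp add: mult_le_0_iff)
        qed
      qed
    qed
  qed
  then show ?thesis unfolding f_def g_def A_def C_def T_def by simp
qed


end
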